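(* Let $(w,d,N,L)$ be a stable Levi–Schubert quadruple with $w\ne(1,\dots,d)$. Then $(w,d,N,L)$ is spherical if and only if its reduction $(\overline w,\overline d,\overline N,\overline L)$ is spherical.
   Context: Work over $\mathbb{C}$. $G_{d,N}$ is the Grassmannian of $d$-planes in $\mathbb{C}^N$ with its Plücker embedding; $B\subset GL_N$ the upper triangular matrices. $I_{d,N}$ is the set of sequences $(i_1<\dots<i_d)$ in $\{1,\dots,N\}$ with the componentwise (Bruhat) order; for $w=(\ell_1,\dots,\ell_d)\in I_{d,N}$, $X(w)$ is the closure of $B\cdot[e_{\ell_1}\wedge\dots\wedge e_{\ell_d}]$ in $G_{d,N}$. A (standard) Levi subgroup $L$ of $GL_N$ is given by integers $0=j_0<j_1<\dots<j_{b_L}=N$: $L$ is the group of invertible block diagonal matrices with diagonal blocks of sizes $N_k=j_k-j_{k-1}$. A Levi–Schubert quadruple $(w,d,N,L)$ consists of integers $1\le d<N$, $w\in I_{d,N}$ and such an $L$; it is stable if $X(w)$ is stable under left multiplication by $L$, and a stable quadruple is spherical if $X(w)$ is a spherical $L$-variety, i.e. has a dense open orbit of a Borel subgroup of $L$. Reduction: for $w\ne(1,\dots,d)$ let $p\ge0$ be maximal with $\ell_i=i$ for $i\le p$; the reduction is $(\overline w,\overline d,\overline N,\overline L)$ with $\overline w=(\ell_{p+1}-p,\dots,\ell_d-p)$, $\overline d=d-p$, $\overline N=\ell_d-p$, and $\overline L\subseteq GL_{\overline N}$ the image of $L$ under the map sending a matrix to its principal submatrix on rows and columns $p+1,\dots,\ell_d$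 (for stable quadruples this is a standard Levi subgroup of $GL_{\overline N}$ and the reduction is stable). *)

theory Defs
  imports Complex_Main
begin

text \<open>Vectors of C^N are functions nat => complex supported on {1..N};
  N x M complex matrices are functions nat => nat => complex (row, column), indices 1-based.
  A point of the Grassmannian G_{d,N} is a d-dimensional subspace of C^N, given as the
  column span of a frame (an N x d matrix of rank d).  The Grassmannian carries its
  classical (analytic) topology, i.e. the quotient topology from the open set of frames;
  closure is described by convergent sequences of frames.\<close>

definition ident :: "nat \<Rightarrow> nat \<Rightarrow> nat \<Rightarrow> complex" where
  "ident N = (\<lambda>i j. if i = j \<and> i \<in> {1..N} then 1 else 0)"

definition matmul :: "nat \<Rightarrow> (nat \<Rightarrow> nat \<Rightarrow> complex) \<Rightarrow> (nat \<Rightarrow> nat \<Rightarrow> complex) \<Rightarrow> (nat \<Rightarrow> nat \<Rightarrow> complex)" where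
  "matmul N a b = (\<lambda>i j. if i \<in> {1..N} \<and> j \<in> {1..N} then (\<Sum>k=1..N. a i k * b k j) else 0)"

definition sqmat :: "nat \<Rightarrow> (nat \<Rightarrow> nat \<Rightarrow> complex) \<Rightarrow> bool" where
  "sqmat N g \<longleftrightarrow> (\<forall>i j. g i j \<noteq> 0 \<longrightarrow> i \<in> {1..N} \<and> j \<in> {1..N})"

definition GL :: "nat \<Rightarrow> (nat \<Rightarrow> nat \<Rightarrow> complex) set" where
  "GL N = {g. sqmat N g \<and> (\<exists>h. sqmat N h \<and> matmul N g h = ident N \<and> matmul N h g = ident N)}"

definition borel :: "nat \<Rightarrow> (nat \<Rightarrow> nat \<Rightarrow> complex) set" where
  "borel N = {g \<in> GL N. \<forall>i j. j < i \<longrightarrow> g i j = 0}"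

definition levi_data :: "nat \<Rightarrow> nat list \<Rightarrow> bool" where
  "levi_data N js \<longleftrightarrow> length js \<ge> 2 \<and> hd js = 0 \<and> sorted_wrt (<) js \<and> last js = N"

definition same_block :: "nat list \<Rightarrow> nat \<Rightarrow> nat \<Rightarrow> bool" where
  "same_block js i j \<longleftrightarrow> (\<exists>k. Suc k < length js \<and> js!k < i \<and> i \<le> js!Suc k \<and> js!k < j \<and> j \<le> js!Suc k)"

definition levi :: "nat \<Rightarrow> nat list \<Rightarrow> (nat \<Rightarrow> nat \<Rightarrow> complex) set" where
  "levi N js = {g \<in> GL N. \<forall>i j. g i j \<noteq> 0 \<longrightarrow> same_block js i j}"

definition Iseq :: "nat \<Rightarrow> nat \<Rightarrow> nat list set" where
  "Iseq d N = {w. length w = d \<and> sorted_wrt (<) w \<and> set w \<subseteq> {1..N}}"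

definition frame :: "nat \<Rightarrow> nat \<Rightarrow> (nat \<Rightarrow> nat \<Rightarrow> complex) \<Rightarrow> bool" where
  "frame N d M \<longleftrightarrow> (\<forall>i j. M i j \<noteq> 0 \<longrightarrow> i \<in> {1..N} \<and> j \<in> {1..d}) \<and>
     (\<forall>c::nat \<Rightarrow> complex. (\<forall>i. (\<Sum>j=1..d. c j * M i j) = 0) \<longrightarrow> (\<forall>j\<in>{1..d}. c j = 0))"

definition colspan :: "nat \<Rightarrow> nat \<Rightarrow> (nat \<Rightarrow> nat \<Rightarrow> complex) \<Rightarrow> (nat \<Rightarrow> complex) set" where
  "colspan N d M = {v. \<exists>c::nat \<Rightarrow> complex. v = (\<lambda>i. if i \<in> {1..N} then (\<Sum>j=1..d. c j * M i j) else 0)}"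

definition grass :: "nat \<Rightarrow> nat \<Rightarrow> (nat \<Rightarrow> complex) set set" where
  "grass N d = {V. \<exists>M. frame N d M \<and> V = colspan N d M}"

definition gclosure :: "nat \<Rightarrow> nat \<Rightarrow> (nat \<Rightarrow> complex) set set \<Rightarrow> (nat \<Rightarrow> complex) set set" where
  "gclosure N d S = {V. \<exists>M F. frame N d M \<and> V = colspan N d M \<and>
      (\<forall>k. frame N d (F k) \<and> colspan N d (F k) \<in> S) \<and>
      (\<forall>i j. (\<lambda>k. F k i j) \<longlonglongrightarrow> M i j)}"

definition rel_open :: "nat \<Rightarrow> nat \<Rightarrow> (nat \<Rightarrow> complex) set set \<Rightarrow> (nat \<Rightarrow> complex) set set \<Rightarrow> bool" where
  "rel_open N d Orb X \<longleftrightarrow> Orb \<subseteq> X \<and> Orb \<inter> gclosure N d (X - Orb) = {}"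

definition act :: "nat \<Rightarrow> (nat \<Rightarrow> nat \<Rightarrow> complex) \<Rightarrow> (nat \<Rightarrow> complex) set \<Rightarrow> (nat \<Rightarrow> complex) set" where
  "act N g V = (\<lambda>v. \<lambda>i. if i \<in> {1..N} then (\<Sum>j=1..N. g i j * v j) else 0) ` V"

definition coord_plane :: "nat \<Rightarrow> nat list \<Rightarrow> (nat \<Rightarrow> complex) set" where
  "coord_plane N w = colspan N (length w) (\<lambda>i j. if j \<in> {1..length w} \<and> i = w!(j-1) then 1 else 0)"

definition schubert :: "nat list \<Rightarrow> nat \<Rightarrow> nat \<Rightarrow> (nat \<Rightarrow> complex) set set" where
  "schubert w d N = gclosure N d ((\<lambda>g. act N g (coord_plane N w)) ` borel N)"

definition stable :: "nat list \<Rightarrow> nat \<Rightarrow> nat \<Rightarrow> (nat \<Rightarrow> nat \<Rightarrow> complex) set \<Rightarrow> bool" where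
  "stable w d N L \<longleftrightarrow> (\<forall>g\<in>L. \<forall>V\<in>schubert w d N. act N g V \<in> schubert w d N)"

definition spherical :: "nat list \<Rightarrow> nat \<Rightarrow> nat \<Rightarrow> (nat \<Rightarrow> nat \<Rightarrow> complex) set \<Rightarrow> bool" where
  "spherical w d N L \<longleftrightarrow> stable w d N L \<and>
     (\<exists>V0 \<in> schubert w d N.
        let Orb = (\<lambda>g. act N g V0) ` (L \<inter> borel N) in
        rel_open N d Orb (schubert w d N) \<and> schubert w d N \<subseteq> gclosure N d Orb)"

definition red_p :: "nat list \<Rightarrow> nat" where
  "red_p w = (GREATEST p. p \<le> length w \<and> (\<forall>i\<in>{1..p}. w!(i-1) = i))"

definition red_w :: "nat list \<Rightarrow> nat list" where
  "red_w w = map (\<lambda>x. x - red_p w) (drop (red_p w) w)"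

definition red_d :: "nat list \<Rightarrow> nat" where
  "red_d w = length w - red_p w"

definition red_N :: "nat list \<Rightarrow> nat" where
  "red_N w = last w - red_p w"

definition principal_sub :: "nat \<Rightarrow> nat \<Rightarrow> (nat \<Rightarrow> nat \<Rightarrow> complex) \<Rightarrow> (nat \<Rightarrow> nat \<Rightarrow> complex)" where
  "principal_sub p m g = (\<lambda>i j. if i \<in> {1..m-p} \<and> j \<in> {1..m-p} then g (i+p) (j+p) else 0)"

definition red_L :: "nat list \<Rightarrow> (nat \<Rightarrow> nat \<Rightarrow> complex) set \<Rightarrow> (nat \<Rightarrow> nat \<Rightarrow> complex) set" where
  "red_L w L = principal_sub (red_p w) (last w) ` L"

end

theory Submission
  imports Defs "HOL-Library.Function_Algebras" "HOL-Analysis.Analysis"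
begin

definition supp :: "nat \<Rightarrow> (nat \<Rightarrow> complex) \<Rightarrow> bool" where
  "supp n v \<longleftrightarrow> (\<forall>i. v i \<noteq> 0 \<longrightarrow> i \<in> {1..n})"

definition sc :: "complex \<Rightarrow> (nat \<Rightarrow> complex) \<Rightarrow> (nat \<Rightarrow> complex)" where
  "sc c v = (\<lambda>i. c * v i)"

definition col :: "nat \<Rightarrow> (nat\<Rightarrow>nat\<Rightarrow>complex) \<Rightarrow> nat \<Rightarrow> (nat \<Rightarrow> complex)" where
  "col N M j = (\<lambda>i. if i \<in> {1..N} then M i j else 0)"

definition mv :: "nat \<Rightarrow> (nat\<Rightarrow>nat\<Rightarrow>complex) \<Rightarrow> (nat\<Rightarrow>complex) \<Rightarrow> (nat\<Rightarrow>complex)" where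
  "mv N g v = (\<lambda>i. if i \<in> {1..N} then (\<Sum>j=1..N. g i j * v j) else 0)"

lemma sum_fun_apply: "(\<Sum>x\<in>A. f x) i = (\<Sum>x\<in>A. f x i)"
  by (induction A rule: infinite_finite_induct) auto

interpretation V: vector_space sc
  by unfold_locales (auto simp: sc_def fun_eq_iff algebra_simps)

lemma act_mv: "act N g V = mv N g ` V"
  unfolding act_def mv_def by simp

lemma subspace_colspan: "V.subspace (colspan N d M)"
  unfolding V.subspace_def colspan_def
proof (intro conjI ballI allI)
  show "0 \<in> {v. \<exists>c. v = (\<lambda>i. if i \<in> {1..N} then \<Sum>j = 1..d. c j * M i j else 0)}"
    by (rule CollectI, rule exI[of _ "\<lambda>_. 0"]) (auto simp: fun_eq_iff)
next
  fix x y assume "x \<in> {v. \<exists>c. v = (\<lambda>i. if i \<in> {1..N} then \<Sum>j = 1..d. c j * M i j else 0)}"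
     "y \<in> {v. \<exists>c. v = (\<lambda>i. if i \<in> {1..N} then \<Sum>j = 1..d. c j * M i j else 0)}"
  then obtain c c' where "x = (\<lambda>i. if i \<in> {1..N} then \<Sum>j = 1..d. c j * M i j else 0)"
     "y = (\<lambda>i. if i \<in> {1..N} then \<Sum>j = 1..d. c' j * M i j else 0)" by auto
  then show "x + y \<in> {v. \<exists>c. v = (\<lambda>i. if i \<in> {1..N} then \<Sum>j = 1..d. c j * M i j else 0)}"
    by (intro CollectI exI[of _ "\<lambda>j. c j + c' j"]) (auto simp: fun_eq_iff sum.distrib algebra_simps)
next
  fix a x assume "x \<in> {v. \<exists>c. v = (\<lambda>i. if i \<in> {1..N} then \<Sum>j = 1..d. c j * M i j else 0)}"
  then obtain c where "x = (\<lambda>i. if i \<in> {1..N} then \<Sum>j = 1..d. c j * M i j else 0)" by auto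
  then show "sc a x \<in> {v. \<exists>c. v = (\<lambda>i. if i \<in> {1..N} then \<Sum>j = 1..d. c j * M i j else 0)}"
    by (intro CollectI exI[of _ "\<lambda>j. a * c j"]) (auto simp: fun_eq_iff sc_def sum_distrib_left algebra_simps)
qed

lemma colspan_span: "colspan N d M = V.span (col N M ` {1..d})"
proof
  show "V.span (col N M ` {1..d}) \<subseteq> colspan N d M"
  proof (rule V.span_minimal[OF _ subspace_colspan])
    show "col N M ` {1..d} \<subseteq> colspan N d M"
    proof
      fix v assume "v \<in> col N M ` {1..d}"
      then obtain j where j: "j \<in> {1..d}" "v = col N M j" by auto
      show "v \<in> colspan N d M" unfolding colspan_def
        apply (rule CollectI, rule exI[of _ "\<lambda>k. if k = j then 1 else 0"])
      proof -
        have "\<And>i. (\<Sum>k=1..d. (if k = j then 1 else 0) * M i k) = (\<Sum>k=1..d. if k = j then M i k else 0)"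
          by (rule sum.cong) auto
        then show "v = (\<lambda>i. if i \<in> {1..N} then \<Sum>k = 1..d. (if k = j then 1 else 0) * M i k else 0)"
          using j by (simp add: col_def fun_eq_iff)
      qed
    qed
  qed
next
  show "colspan N d M \<subseteq> V.span (col N M ` {1..d})"
  proof
    fix v assume "v \<in> colspan N d M"
    then obtain c where c: "v = (\<lambda>i. if i \<in> {1..N} then \<Sum>j = 1..d. c j * M i j else 0)"
      unfolding colspan_def by auto
    have "v = (\<Sum>j\<in>{1..d}. sc (c j) (col N M j))"
      by (auto simp: c fun_eq_iff sum_fun_apply sc_def col_def)
    also have "\<dots> \<in> V.span (col N M ` {1..d})"
      by (intro V.span_sum V.span_scale V.span_base) auto
    finally show "v \<in> V.span (col N M ` {1..d})" .
  qed
qed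

lemma frame_supp: "frame N d M \<Longrightarrow> M i j \<noteq> 0 \<Longrightarrow> i \<in> {1..N} \<and> j \<in> {1..d}"
  unfolding frame_def by blast

lemma frame_indep: "frame N d M \<Longrightarrow> (\<forall>i. (\<Sum>j=1..d. c j * M i j) = 0) \<Longrightarrow> j \<in> {1..d} \<Longrightarrow> c j = 0"
  unfolding frame_def by blast

lemma frame_inj: assumes "frame N d M" shows "inj_on (col N M) {1..d}"
proof (rule inj_onI, rule ccontr)
  fix a b assume ab: "a \<in> {1..d}" "b \<in> {1..d}" "col N M a = col N M b" "a \<noteq> b"
  have "\<forall>i. (\<Sum>j=1..d. (\<lambda>j. if j = a then 1 else if j = b then -1 else 0) j * M i j) = 0"
  proof
    fix i
    have "M i a = M i b"
    proof (cases "i \<in> {1..N}")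
      case True then show ?thesis using fun_cong[OF ab(3), of i] by (simp add: col_def)
    next
      case False then show ?thesis using frame_supp[OF assms] by (metis)
    qed
    have "(\<Sum>j=1..d. (\<lambda>j. if j = a then 1 else if j = b then -1 else 0) j * M i j)
        = (\<Sum>j=1..d. (if j = a then M i j else 0) - (if j = b then M i j else 0))"
      using ab(4) by (intro sum.cong) auto
    also have "\<dots> = M i a - M i b" using ab by (simp add: sum_subtractf sum.delta)
    finally show "(\<Sum>j=1..d. (\<lambda>j. if j = a then 1 else if j = b then -1 else 0) j * M i j) = 0"
      using \<open>M i a = M i b\<close> by simp
  qed
  from frame_indep[OF assms this ab(1)] show False by simp
qed

lemma frame_independent: assumes fr: "frame N d M" shows "V.independent (col N M ` {1..d})"
proof
  assume "V.dependent (col N M ` {1..d})"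
  then obtain u where u: "\<exists>v\<in>col N M ` {1..d}. u v \<noteq> 0"
    "(\<Sum>v\<in>col N M ` {1..d}. sc (u v) v) = 0"
    using V.dependent_finite[of "col N M ` {1..d}"] by auto
  have "(\<Sum>v\<in>col N M ` {1..d}. sc (u v) v) = (\<Sum>j\<in>{1..d}. sc (u (col N M j)) (col N M j))"
    using sum.reindex[OF frame_inj[OF fr], of "\<lambda>v. sc (u v) v"] by simp
  then have z: "(\<Sum>j\<in>{1..d}. sc (u (col N M j)) (col N M j)) = 0" using u(2) by simp
  have "\<forall>i. (\<Sum>j=1..d. u (col N M j) * M i j) = 0"
  proof
    fix i
    show "(\<Sum>j=1..d. u (col N M j) * M i j) = 0"
    proof (cases "i \<in> {1..N}")
      case True
      then show ?thesis using fun_cong[OF z, of i] by (simp add: sum_fun_apply sc_def col_def)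
    next
      case False
      then have "\<And>j. M i j = 0" using frame_supp[OF fr] by metis
      then show ?thesis by simp
    qed
  qed
  then have "\<And>j. j \<in> {1..d} \<Longrightarrow> u (col N M j) = 0"
    using frame_indep[OF fr, where c = "\<lambda>j. u (col N M j)"] by blast
  then show False using u(1) by auto
qed

lemma frame_card: "frame N d M \<Longrightarrow> card (col N M ` {1..d}) = d"
  using card_image[OF frame_inj] by simp

lemma frame_from_basis:
  assumes fin: "finite B" and cB: "card B = r" and ind: "V.independent B" and sp: "\<forall>b\<in>B. supp n b"
  obtains H where "frame n r H" "colspan n r H = V.span B" "\<forall>t\<in>{1..r}. col n H t \<in> B"
proof -
  obtain f where f: "bij_betw f {1..r} B" using ex_bij_betw_nat_finite_1[OF fin] cB by auto
  define H where "H = (\<lambda>i t. if t \<in> {1..r} then f t i else 0)"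
  have colH: "col n H t = f t" if "t \<in> {1..r}" for t
  proof -
    have "supp n (f t)" using sp f that by (auto simp: bij_betw_def)
    then show ?thesis using that by (auto simp: col_def H_def fun_eq_iff supp_def)
  qed
  have fr: "frame n r H"
    unfolding frame_def
  proof (rule conjI; intro allI impI)
    fix i j assume "H i j \<noteq> 0"
    then have "j \<in> {1..r}" "f j i \<noteq> 0" by (auto simp: H_def split: if_splits)
    moreover have "supp n (f j)" using sp f \<open>j \<in> {1..r}\<close> by (auto simp: bij_betw_def)
    ultimately show "i \<in> {1..n} \<and> j \<in> {1..r}" by (auto simp: supp_def)
  next
    fix c :: "nat \<Rightarrow> complex" assume c: "\<forall>i. (\<Sum>j = 1..r. c j * H i j) = 0"
    show "\<forall>j\<in>{1..r}. c j = 0"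
    proof (rule ccontr)
      assume "\<not> (\<forall>j\<in>{1..r}. c j = 0)"
      then obtain t0 where t0: "t0 \<in> {1..r}" "c t0 \<noteq> 0" by auto
      define u where "u = (\<lambda>b. c (inv_into {1..r} f b))"
      have "(\<Sum>b\<in>B. sc (u b) b) = (\<Sum>t\<in>{1..r}. sc (u (f t)) (f t))"
        using sum.reindex_bij_betw[OF f, of "\<lambda>b. sc (u b) b"] by simp
      also have "\<dots> = (\<Sum>t\<in>{1..r}. sc (c t) (f t))"
        using f by (intro sum.cong) (auto simp: u_def bij_betw_def inv_into_f_f)
      also have "\<dots> = 0"
      proof
        fix i
        have "(\<Sum>t\<in>{1..r}. sc (c t) (f t)) i = (\<Sum>j = 1..r. c j * H i j)"
          by (auto simp: sum_fun_apply sc_def H_def intro!: sum.cong)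
        then show "(\<Sum>t\<in>{1..r}. sc (c t) (f t)) i = 0 i" using c by simp
      qed
      finally have "(\<Sum>b\<in>B. sc (u b) b) = 0" .
      moreover have "f t0 \<in> B" "u (f t0) \<noteq> 0" using f t0
        by (auto simp: u_def bij_betw_def inv_into_f_f)
      ultimately have "V.dependent B" using V.dependent_finite[OF fin] by blast
      then show False using ind by simp
    qed
  qed
  have "col n H ` {1..r} = f ` {1..r}" using colH by auto
  also have "\<dots> = B" using f by (simp add: bij_betw_def)
  finally have "colspan n r H = V.span B" by (simp add: colspan_span)
  moreover have "\<forall>t\<in>{1..r}. col n H t \<in> B" using colH f by (auto simp: bij_betw_def)
  ultimately show ?thesis using that fr by blast
qed

lemma span_eq_card:
  assumes fT: "finite T" and iS: "V.independent S" and sub: "S \<subseteq> V.span T"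
    and cT: "card T \<le> card S" and fS: "finite S"
  shows "V.span S = V.span T"
proof
  show "V.span S \<subseteq> V.span T" using sub V.span_minimal V.subspace_span by blast
  have "T \<subseteq> V.span S"
  proof
    fix t assume t: "t \<in> T"
    show "t \<in> V.span S"
    proof (rule ccontr)
      assume nt: "t \<notin> V.span S"
      then have tS: "t \<notin> S" using V.span_base by blast
      have "V.independent (insert t S)" using V.independent_insertI[OF nt iS] .
      moreover have "insert t S \<subseteq> V.span T" using sub t V.span_base by blast
      ultimately have "card (insert t S) \<le> card T" using V.independent_span_bound[OF fT] by blast
      then show False using cT tS fS by simp
    qed
  qed
  then show "V.span T \<subseteq> V.span S" using V.span_minimal V.subspace_span by blast
qed

lemma D2:
  assumes "frame n r H" "frame n r G" "colspan n r H \<subseteq> colspan n r G"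
  shows "colspan n r H = colspan n r G"
proof -
  have "col n H ` {1..r} \<subseteq> V.span (col n G ` {1..r})"
    using assms(3) V.span_superset unfolding colspan_span by blast
  then show ?thesis unfolding colspan_span
    using span_eq_card[of "col n G ` {1..r}" "col n H ` {1..r}"]
      frame_independent[OF assms(1)] frame_card[OF assms(1)] frame_card[OF assms(2)]
    by simp
qed


lemma bw:
  fixes c :: "nat \<Rightarrow> nat \<Rightarrow> complex"
  assumes "finite J" "\<forall>k. \<forall>j\<in>J. norm (c k j) \<le> Bd"
  shows "\<exists>\<sigma> l. strict_mono \<sigma> \<and> (\<forall>j\<in>J. (\<lambda>k. c (\<sigma> k) j) \<longlonglongrightarrow> l j)"
  using assms
proof (induction J rule: finite_induct)
  case empty
  show ?case by (rule exI[of _ id]) (auto simp: strict_mono_def)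
next
  case (insert j J)
  then obtain \<sigma> l where s: "strict_mono \<sigma>" "\<forall>j\<in>J. (\<lambda>k. c (\<sigma> k) j) \<longlonglongrightarrow> l j" by auto
  have "bounded (range (\<lambda>k. c (\<sigma> k) j))"
    unfolding bounded_iff using insert.prems by auto
  then obtain l' \<tau> where t: "strict_mono \<tau>" "((\<lambda>k. c (\<sigma> k) j) \<circ> \<tau>) \<longlonglongrightarrow> l'"
    using bounded_imp_convergent_subsequence by blast
  have "strict_mono (\<sigma> \<circ> \<tau>)" using s t strict_mono_o by blast
  moreover have "\<forall>j'\<in>insert j J. (\<lambda>k. c ((\<sigma> \<circ> \<tau>) k) j') \<longlonglongrightarrow> (l(j := l')) j'"
  proof
    fix j' assume "j' \<in> insert j J"
    then consider "j' = j" | "j' \<in> J" "j' \<noteq> j" by auto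
    then show "(\<lambda>k. c ((\<sigma> \<circ> \<tau>) k) j') \<longlonglongrightarrow> (l(j := l')) j'"
    proof cases
      case 1 then show ?thesis using t(2) by (simp add: comp_def)
    next
      case 2 then show ?thesis using LIMSEQ_subseq_LIMSEQ[OF s(2)[rule_format, OF 2(1)] t(1)]
        by (simp add: comp_def)
    qed
  qed
  ultimately show ?case by blast
qed

lemma closed_colspan:
  assumes fr: "frame N d M" and frF: "\<forall>k. frame N d (F k)"
    and FM: "\<forall>i j. (\<lambda>k. F k i j) \<longlonglongrightarrow> M i j"
    and vF: "\<forall>k. v k \<in> colspan N d (F k)" and vx: "\<forall>i. (\<lambda>k. v k i) \<longlonglongrightarrow> x i"
  shows "x \<in> colspan N d M"
proof -
  from vF obtain c where c: "\<forall>k. v k = (\<lambda>i. if i \<in> {1..N} then (\<Sum>j=1..d. c k j * F k i j) else 0)"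
    unfolding colspan_def by (auto simp: choice_iff)
  define s where "s k = 1 + (\<Sum>j=1..d. norm (c k j))" for k
  have spos: "s k > 0" "s k \<ge> 1" for k unfolding s_def
    by (simp_all add: add_pos_nonneg sum_nonneg)
  define a where "a k j = (if j = 0 then complex_of_real (1 / s k) else c k j / complex_of_real (s k))" for k j
  have abd: "\<forall>k. \<forall>j\<in>{0..d}. norm (a k j) \<le> 1"
  proof (intro allI ballI)
    fix k j assume j: "j \<in> {0..d}"
    show "norm (a k j) \<le> 1"
    proof (cases "j = 0")
      case True then show ?thesis using spos[of k] by (simp add: a_def norm_divide)
    next
      case False
      then have "norm (c k j) \<le> (\<Sum>j=1..d. norm (c k j))" using j
        by (intro member_le_sum) auto
      then have "norm (c k j) \<le> s k" unfolding s_def by simp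
      then show ?thesis using False spos[of k] by (simp add: a_def norm_divide divide_le_eq_1)
    qed
  qed
  obtain \<sigma> l where sl: "strict_mono \<sigma>" "\<forall>j\<in>{0..d}. (\<lambda>k. a (\<sigma> k) j) \<longlonglongrightarrow> l j"
    using bw[OF _ abd] by blast
  have norm1: "norm (a k 0) + (\<Sum>j=1..d. norm (a k j)) = 1" for k
  proof -
    have "(\<Sum>j=1..d. norm (a k j)) = (\<Sum>j=1..d. norm (c k j) / s k)"
      using spos[of k] by (intro sum.cong) (auto simp: a_def norm_divide)
    also have "\<dots> = (s k - 1) / s k" by (simp add: s_def sum_divide_distrib)
    finally show ?thesis using spos[of k] by (simp add: a_def diff_divide_distrib norm_divide)
  qed
  have "(\<lambda>k. norm (a (\<sigma> k) 0) + (\<Sum>j=1..d. norm (a (\<sigma> k) j))) \<longlonglongrightarrow> norm (l 0) + (\<Sum>j=1..d. norm (l j))"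
    using sl(2) by (intro tendsto_intros) auto
  moreover have "(\<lambda>k. norm (a (\<sigma> k) 0) + (\<Sum>j=1..d. norm (a (\<sigma> k) j))) \<longlonglongrightarrow> 1"
    unfolding norm1 by simp
  ultimately have lnorm: "norm (l 0) + (\<Sum>j=1..d. norm (l j)) = 1"
    by (rule LIMSEQ_unique)
  have eq: "(\<Sum>j=1..d. a k j * F k i j) = a k 0 * v k i" if "i \<in> {1..N}" for k i
  proof -
    have "(\<Sum>j=1..d. a k j * F k i j) = (\<Sum>j=1..d. c k j * F k i j) / s k"
      by (auto simp: a_def sum_divide_distrib intro!: sum.cong)
    also have "\<dots> = a k 0 * v k i" using that c by (simp add: a_def)
    finally show ?thesis .
  qed
  have lim: "(\<Sum>j=1..d. l j * M i j) = l 0 * x i" if "i \<in> {1..N}" for i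
  proof -
    have "(\<lambda>k. (\<Sum>j=1..d. a (\<sigma> k) j * F (\<sigma> k) i j)) \<longlonglongrightarrow> (\<Sum>j=1..d. l j * M i j)"
      using sl(2) LIMSEQ_subseq_LIMSEQ[OF FM[rule_format] sl(1)]
      by (intro tendsto_intros) (auto simp: comp_def)
    moreover have "(\<lambda>k. a (\<sigma> k) 0 * v (\<sigma> k) i) \<longlonglongrightarrow> l 0 * x i"
      using sl(2) LIMSEQ_subseq_LIMSEQ[OF vx[rule_format] sl(1)]
      by (intro tendsto_intros) (auto simp: comp_def)
    moreover have "(\<lambda>k. (\<Sum>j=1..d. a (\<sigma> k) j * F (\<sigma> k) i j)) = (\<lambda>k. a (\<sigma> k) 0 * v (\<sigma> k) i)"
      using eq[OF that] by simp
    ultimately show ?thesis using LIMSEQ_unique by force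
  qed
  have Mz: "M i j = 0" if "i \<notin> {1..N}" for i j using frame_supp[OF fr] that by metis
  have l0: "l 0 \<noteq> 0"
  proof
    assume l0: "l 0 = 0"
    have "\<forall>i. (\<Sum>j=1..d. l j * M i j) = 0"
    proof
      fix i show "(\<Sum>j=1..d. l j * M i j) = 0"
        using lim[of i] l0 Mz[of i] by (cases "i \<in> {1..N}") auto
    qed
    then have "\<forall>j\<in>{1..d}. l j = 0" using frame_indep[OF fr] by blast
    then have "(\<Sum>j=1..d. norm (l j)) = 0" by simp
    then show False using lnorm l0 by simp
  qed
  have xz: "x i = 0" if "i \<notin> {1..N}" for i
  proof -
    have "(\<lambda>k. v k i) = (\<lambda>k. 0)" using c that by auto
    then show ?thesis using vx[rule_format, of i] LIMSEQ_unique tendsto_const by metis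
  qed
  have "x = (\<lambda>i. if i \<in> {1..N} then (\<Sum>j=1..d. (l j / l 0) * M i j) else 0)"
  proof
    fix i show "x i = (if i \<in> {1..N} then (\<Sum>j=1..d. (l j / l 0) * M i j) else 0)"
    proof (cases "i \<in> {1..N}")
      case True
      have "(\<Sum>j=1..d. (l j / l 0) * M i j) = (\<Sum>j=1..d. l j * M i j) / l 0"
        by (auto simp: sum_divide_distrib intro!: sum.cong)
      then show ?thesis using lim[OF True] l0 True by simp
    next
      case False
      then show ?thesis using xz[OF False] by auto
    qed
  qed
  then show ?thesis unfolding colspan_def mem_Collect_eq by (rule exI[of _ "\<lambda>j. l j / l 0"])
qed

lemma nonframe_limit:
  assumes supG: "\<forall>k i j. G k i j \<noteq> 0 \<longrightarrow> i \<in> {1..n} \<and> j \<in> {1..r}"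
    and nf: "\<forall>k. \<not> frame n r (G k)"
    and lim: "\<forall>i j. (\<lambda>k. G k i j) \<longlonglongrightarrow> H i j"
  shows "\<not> frame n r H"
proof
  assume fr: "frame n r H"
  have "\<forall>k. \<exists>c. (\<forall>i. (\<Sum>j=1..r. c j * G k i j) = 0) \<and> (\<exists>j\<in>{1..r}. c j \<noteq> 0)"
  proof
    fix k
    from nf have "\<not> frame n r (G k)" by blast
    then show "\<exists>c. (\<forall>i. (\<Sum>j=1..r. c j * G k i j) = 0) \<and> (\<exists>j\<in>{1..r}. c j \<noteq> 0)"
      using supG unfolding frame_def by blast
  qed
  then obtain c where c: "\<forall>k. (\<forall>i. (\<Sum>j=1..r. c k j * G k i j) = 0) \<and> (\<exists>j\<in>{1..r}. c k j \<noteq> 0)"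
    by metis
  define s where "s k = (\<Sum>j=1..r. norm (c k j))" for k
  have spos: "s k > 0" for k
  proof -
    obtain j where "j \<in> {1..r}" "c k j \<noteq> 0" using c by blast
    then have "norm (c k j) \<le> s k" "norm (c k j) > 0" unfolding s_def
      by (auto intro!: member_le_sum)
    then show ?thesis by linarith
  qed
  define a where "a k j = c k j / complex_of_real (s k)" for k j
  have abd: "\<forall>k. \<forall>j\<in>{1..r}. norm (a k j) \<le> 1"
  proof (intro allI ballI)
    fix k j assume j: "j \<in> {1..r}"
    then have "norm (c k j) \<le> s k" unfolding s_def by (intro member_le_sum) auto
    then show "norm (a k j) \<le> 1" using spos[of k] by (simp add: a_def norm_divide divide_le_eq_1)
  qed
  obtain \<sigma> l where sl: "strict_mono \<sigma>" "\<forall>j\<in>{1..r}. (\<lambda>k. a (\<sigma> k) j) \<longlonglongrightarrow> l j"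
    using bw[OF _ abd] by blast
  have n1: "(\<Sum>j=1..r. norm (a k j)) = 1" for k
  proof -
    have "(\<Sum>j=1..r. norm (a k j)) = (\<Sum>j=1..r. norm (c k j) / s k)"
      using spos[of k] by (intro sum.cong) (auto simp: a_def norm_divide)
    also have "\<dots> = (\<Sum>j=1..r. norm (c k j)) / s k" by (simp add: sum_divide_distrib)
    also have "\<dots> = 1" using spos[of k] unfolding s_def by simp
    finally show ?thesis .
  qed
  have "(\<lambda>k. (\<Sum>j=1..r. norm (a (\<sigma> k) j))) \<longlonglongrightarrow> (\<Sum>j=1..r. norm (l j))"
    using sl(2) by (intro tendsto_intros) auto
  moreover have "(\<lambda>k. (\<Sum>j=1..r. norm (a (\<sigma> k) j))) \<longlonglongrightarrow> 1"
    unfolding n1 by simp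
  ultimately have ln: "(\<Sum>j=1..r. norm (l j)) = 1"
    by (rule LIMSEQ_unique)
  have "\<forall>i. (\<Sum>j=1..r. l j * H i j) = 0"
  proof
    fix i
    have "(\<lambda>k. (\<Sum>j=1..r. a (\<sigma> k) j * G (\<sigma> k) i j)) \<longlonglongrightarrow> (\<Sum>j=1..r. l j * H i j)"
      using sl(2) LIMSEQ_subseq_LIMSEQ[OF lim[rule_format] sl(1)]
      by (intro tendsto_intros) (auto simp: comp_def)
    moreover have "(\<Sum>j=1..r. a k j * G k i j) = 0" for k
    proof -
      have "(\<Sum>j=1..r. a k j * G k i j) = (\<Sum>j=1..r. c k j * G k i j) / s k"
        by (auto simp: a_def sum_divide_distrib intro!: sum.cong)
      then show ?thesis using c by simp
    qed
    ultimately have "(\<lambda>k. 0) \<longlonglongrightarrow> (\<Sum>j=1..r. l j * H i j)" by simp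
    then show "(\<Sum>j=1..r. l j * H i j) = 0"
      using LIMSEQ_unique tendsto_const by metis
  qed
  then have "\<forall>j\<in>{1..r}. l j = 0" using frame_indep[OF fr] by blast
  then show False using ln by simp
qed

lemma frame_open:
  assumes fr: "frame n r H"
    and supG: "\<forall>k i j. G k i j \<noteq> 0 \<longrightarrow> i \<in> {1..n} \<and> j \<in> {1..r}"
    and lim: "\<forall>i j. (\<lambda>k. G k i j) \<longlonglongrightarrow> H i j"
  shows "\<exists>K. \<forall>k\<ge>K. frame n r (G k)"
proof (rule ccontr)
  assume "\<not> (\<exists>K. \<forall>k\<ge>K. frame n r (G k))"
  then have inf: "infinite {k. \<not> frame n r (G k)}"
    unfolding infinite_nat_iff_unbounded_le mem_Collect_eq by (meson not_le_imp_less less_imp_le)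
  have "\<exists>\<sigma>::nat\<Rightarrow>nat. strict_mono \<sigma> \<and> (\<forall>k. \<sigma> k \<in> {k. \<not> frame n r (G k)})"
    by (rule infinite_enumerate[OF inf])
  then obtain \<sigma> :: "nat \<Rightarrow> nat" where s: "strict_mono \<sigma>" "\<forall>k. \<sigma> k \<in> {k. \<not> frame n r (G k)}"
    by blast
  have "\<not> frame n r H"
  proof (rule nonframe_limit[of "\<lambda>k. G (\<sigma> k)"])
    show "\<forall>k i j. G (\<sigma> k) i j \<noteq> 0 \<longrightarrow> i \<in> {1..n} \<and> j \<in> {1..r}" using supG by blast
    show "\<forall>k. \<not> frame n r (G (\<sigma> k))" using s by blast
    show "\<forall>i j. (\<lambda>k. G (\<sigma> k) i j) \<longlonglongrightarrow> H i j"
      using LIMSEQ_subseq_LIMSEQ[OF lim[rule_format] s(1)] by (simp add: comp_def)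
  qed
  then show False using fr by blast
qed


definition iota :: "nat \<Rightarrow> (nat \<Rightarrow> complex) \<Rightarrow> (nat \<Rightarrow> complex)" where
  "iota p u = (\<lambda>i. if p < i then u (i - p) else 0)"

definition proj :: "nat \<Rightarrow> nat \<Rightarrow> (nat \<Rightarrow> complex) \<Rightarrow> (nat \<Rightarrow> complex)" where
  "proj p n v = (\<lambda>i. if i \<in> {1..n} then v (i + p) else 0)"

definition Psi :: "nat \<Rightarrow> (nat \<Rightarrow> complex) set \<Rightarrow> (nat \<Rightarrow> complex) set" where
  "Psi p U = {e + iota p u | e u. supp p e \<and> u \<in> U}"

definition Ext :: "nat \<Rightarrow> nat \<Rightarrow> nat \<Rightarrow> (nat\<Rightarrow>nat\<Rightarrow>complex) \<Rightarrow> (nat\<Rightarrow>nat\<Rightarrow>complex)" where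
  "Ext p n d H = (\<lambda>i j. if j \<in> {1..p} then (if i = j then 1 else 0)
      else if j \<in> {p+1..d} \<and> i \<in> {p+1..p+n} then H (i-p) (j-p) else 0)"

definition unitv :: "nat \<Rightarrow> (nat \<Rightarrow> complex)" where
  "unitv i = (\<lambda>k. if k = i then 1 else 0)"

lemma supp_add: "supp n a \<Longrightarrow> supp n b \<Longrightarrow> supp n (a + b)"
  unfolding supp_def plus_fun_def by (metis add.right_neutral add.left_neutral)

lemma supp_0[simp]: "supp n 0"
  by (auto simp: supp_def)

lemma proj_add: "proj p n (a + b) = proj p n a + proj p n b"
  by (auto simp: proj_def fun_eq_iff)

lemma proj_supp_p: "supp p e \<Longrightarrow> proj p n e = 0"
  by (auto simp: proj_def supp_def fun_eq_iff)

lemma proj_iota: "supp n u \<Longrightarrow> proj p n (iota p u) = u"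
  by (auto simp: proj_def iota_def supp_def fun_eq_iff)

lemma supp_proj: "supp n (proj p n v)"
  by (auto simp: proj_def supp_def)

lemma proj_Psi: "\<forall>u\<in>U. supp n u \<Longrightarrow> proj p n ` Psi p U = U"
proof
  assume a: "\<forall>u\<in>U. supp n u"
  show "proj p n ` Psi p U \<subseteq> U"
    using a by (auto simp: Psi_def proj_add proj_supp_p proj_iota)
  show "U \<subseteq> proj p n ` Psi p U"
  proof
    fix u assume "u \<in> U"
    then have "0 + iota p u \<in> Psi p U" unfolding Psi_def using supp_0 by blast
    moreover have "proj p n (0 + iota p u) = u" using a \<open>u \<in> U\<close> by (simp add: proj_iota)
    ultimately show "u \<in> proj p n ` Psi p U" by force
  qed
qed

lemma Psi_inj:
  assumes "\<forall>u\<in>U. supp n u" "\<forall>u\<in>U'. supp n u" "Psi p U = Psi p U'"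
  shows "U = U'"
proof -
  have "U = proj p n ` Psi p U" using proj_Psi[OF assms(1)] by simp
  also have "\<dots> = proj p n ` Psi p U'" by (simp only: assms(3))
  also have "\<dots> = U'" using proj_Psi[OF assms(2)] by simp
  finally show ?thesis .
qed

lemma iota_proj:
  assumes "supp (p+n) v"
  shows "iota p (proj p n v) = v - (\<lambda>i. if i \<le> p then v i else 0)"
  using assms by (auto simp: iota_def proj_def supp_def fun_eq_iff)

lemma supp_restr: "supp (p+n) v \<Longrightarrow> supp p (\<lambda>i. if i \<le> p then v i else 0)"
  by (auto simp: supp_def)

lemma colspan_add: "x \<in> colspan N d M \<Longrightarrow> y \<in> colspan N d M \<Longrightarrow> x + y \<in> colspan N d M"
  using subspace_colspan unfolding V.subspace_def by blast

lemma colspan_diff: "x \<in> colspan N d M \<Longrightarrow> y \<in> colspan N d M \<Longrightarrow> x - y \<in> colspan N d M"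
  using V.subspace_diff[OF subspace_colspan] by blast

lemma Psi_proj:
  assumes Ep: "\<forall>e. supp p e \<longrightarrow> e \<in> colspan N d M"
    and sv: "\<forall>v\<in>colspan N d M. supp (p+n) v"
  shows "Psi p (proj p n ` colspan N d M) = colspan N d M"
proof
  show "Psi p (proj p n ` colspan N d M) \<subseteq> colspan N d M"
  proof
    fix x assume "x \<in> Psi p (proj p n ` colspan N d M)"
    then obtain e v where x: "x = e + iota p (proj p n v)" "supp p e" "v \<in> colspan N d M"
      unfolding Psi_def by auto
    have "iota p (proj p n v) = v - (\<lambda>i. if i \<le> p then v i else 0)"
      using iota_proj sv x(3) by blast
    moreover have "(\<lambda>i. if i \<le> p then v i else 0) \<in> colspan N d M"
      using Ep supp_restr sv x(3) by blast
    ultimately have "iota p (proj p n v) \<in> colspan N d M" using colspan_diff x(3) by metis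
    then show "x \<in> colspan N d M" using x colspan_add Ep by metis
  qed
  show "colspan N d M \<subseteq> Psi p (proj p n ` colspan N d M)"
  proof
    fix v assume v: "v \<in> colspan N d M"
    have "v = (\<lambda>i. if i \<le> p then v i else 0) + iota p (proj p n v)"
      using iota_proj[OF sv[rule_format, OF v]] by (simp add: fun_eq_iff)
    then show "v \<in> Psi p (proj p n ` colspan N d M)"
      unfolding Psi_def using supp_restr sv v by blast
  qed
qed

lemma Ext_comb:
  assumes pd: "p \<le> d" and pnN: "p + n \<le> N"
  shows "(\<lambda>i. if i \<in> {1..N} then \<Sum>j=1..d. c j * Ext p n d H i j else 0)
    = (\<lambda>i. if i \<in> {1..p} then c i else 0)
      + iota p (\<lambda>r. if r \<in> {1..n} then \<Sum>j=1..d-p. c (j+p) * H r j else 0)"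
proof
  fix i
  have split: "{1..d} = {1..p} \<union> {p+1..d}" using pd by auto
  have s1: "(\<Sum>j\<in>{1..p}. c j * Ext p n d H i j) = (if i \<in> {1..p} then c i else 0)"
  proof -
    have "(\<Sum>j\<in>{1..p}. c j * Ext p n d H i j) = (\<Sum>j\<in>{1..p}. if i = j then c j else 0)"
      by (intro sum.cong) (auto simp: Ext_def)
    then show ?thesis by (simp add: sum.delta)
  qed
  have s2: "(\<Sum>j\<in>{p+1..d}. c j * Ext p n d H i j)
      = (if i \<in> {p+1..p+n} then (\<Sum>j=1..d-p. c (j+p) * H (i-p) j) else 0)"
  proof (cases "i \<in> {p+1..p+n}")
    case True
    have "(\<Sum>j\<in>{p+1..d}. c j * Ext p n d H i j) = (\<Sum>j\<in>{1+p..(d-p)+p}. c j * H (i-p) (j-p))"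
      using True pd by (intro sum.cong) (auto simp: Ext_def)
    also have "\<dots> = (\<Sum>j=1..d-p. c (j+p) * H (i-p) j)"
      by (subst sum.shift_bounds_cl_nat_ivl) simp
    finally show ?thesis using True by simp
  next
    case False
    then show ?thesis by (auto simp: Ext_def intro!: sum.neutral)
  qed
  have "(\<Sum>j=1..d. c j * Ext p n d H i j) = (\<Sum>j\<in>{1..p}. c j * Ext p n d H i j) + (\<Sum>j\<in>{p+1..d}. c j * Ext p n d H i j)"
    unfolding split by (rule sum.union_disjoint) auto
  then show "(if i \<in> {1..N} then \<Sum>j=1..d. c j * Ext p n d H i j else 0) =
    ((\<lambda>i. if i \<in> {1..p} then c i else 0)
      + iota p (\<lambda>r. if r \<in> {1..n} then \<Sum>j=1..d-p. c (j+p) * H r j else 0)) i"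
    using s1 s2 pnN by (auto simp: iota_def)
qed

lemma colspan_Ext:
  assumes pd: "p \<le> d" and pnN: "p + n \<le> N"
  shows "colspan N d (Ext p n d H) = Psi p (colspan n (d-p) H)"
proof
  show "colspan N d (Ext p n d H) \<subseteq> Psi p (colspan n (d-p) H)"
  proof
    fix x assume "x \<in> colspan N d (Ext p n d H)"
    then obtain c where x: "x = (\<lambda>i. if i \<in> {1..N} then \<Sum>j=1..d. c j * Ext p n d H i j else 0)"
      unfolding colspan_def by blast
    have "supp p (\<lambda>i. if i \<in> {1..p} then c i else 0)" by (auto simp: supp_def)
    moreover have "(\<lambda>r. if r \<in> {1..n} then \<Sum>j=1..d-p. c (j+p) * H r j else 0) \<in> colspan n (d-p) H"
      unfolding colspan_def mem_Collect_eq by (rule exI[of _ "\<lambda>j. c (j+p)"]) (rule refl)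
    ultimately show "x \<in> Psi p (colspan n (d-p) H)"
      unfolding x Ext_comb[OF pd pnN] Psi_def by blast
  qed
  show "Psi p (colspan n (d-p) H) \<subseteq> colspan N d (Ext p n d H)"
  proof
    fix x assume "x \<in> Psi p (colspan n (d-p) H)"
    then obtain e c' where x: "x = e + iota p (\<lambda>r. if r \<in> {1..n} then \<Sum>j=1..d-p. c' j * H r j else 0)"
      and e: "supp p e"
      unfolding Psi_def colspan_def by blast
    define c where "c j = (if j \<le> p then e j else c' (j - p))" for j
    have "e = (\<lambda>i. if i \<in> {1..p} then c i else 0)"
      using e by (auto simp: c_def supp_def fun_eq_iff)
    moreover have "(\<lambda>r. if r \<in> {1..n} then \<Sum>j=1..d-p. c' j * H r j else 0)
        = (\<lambda>r. if r \<in> {1..n} then \<Sum>j=1..d-p. c (j+p) * H r j else 0)"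
      by (auto simp: c_def fun_eq_iff intro!: sum.cong)
    ultimately have "x = (\<lambda>i. if i \<in> {1..N} then \<Sum>j=1..d. c j * Ext p n d H i j else 0)"
      unfolding Ext_comb[OF pd pnN] x by simp
    then show "x \<in> colspan N d (Ext p n d H)" unfolding colspan_def mem_Collect_eq by (rule exI[of _ c])
  qed
qed

lemma frame_Ext:
  assumes pd: "p \<le> d" and pnN: "p + n \<le> N" and fr: "frame n (d-p) H"
  shows "frame N d (Ext p n d H)"
  unfolding frame_def
proof (rule conjI; intro allI impI)
  fix i j assume "Ext p n d H i j \<noteq> 0"
  then show "i \<in> {1..N} \<and> j \<in> {1..d}" using pd pnN
    by (auto simp: Ext_def split: if_splits)
next
  fix c :: "nat \<Rightarrow> complex" assume c: "\<forall>i. (\<Sum>j=1..d. c j * Ext p n d H i j) = 0"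
  have z: "(\<lambda>i. if i \<in> {1..p} then c i else 0)
      + iota p (\<lambda>r. if r \<in> {1..n} then \<Sum>j=1..d-p. c (j+p) * H r j else 0) = 0"
    unfolding Ext_comb[OF pd pnN, symmetric] using c by (simp add: fun_eq_iff)
  have c1: "c j = 0" if "j \<in> {1..p}" for j
    using fun_cong[OF z, of j] that by (auto simp: iota_def)
  have "\<forall>r. (\<Sum>j=1..d-p. c (j+p) * H r j) = 0"
  proof
    fix r
    show "(\<Sum>j=1..d-p. c (j+p) * H r j) = 0"
    proof (cases "r \<in> {1..n}")
      case True
      then show ?thesis using fun_cong[OF z, of "r+p"] by (auto simp: iota_def)
    next
      case False
      then have "\<And>j. H r j = 0" using frame_supp[OF fr] by metis
      then show ?thesis by simp
    qed
  qed
  then have c2: "c (j+p) = 0" if "j \<in> {1..d-p}" for j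
    using frame_indep[OF fr, where c = "\<lambda>j. c (j+p)"] that by blast
  show "\<forall>j\<in>{1..d}. c j = 0"
  proof
    fix j assume j: "j \<in> {1..d}"
    show "c j = 0"
    proof (cases "j \<le> p")
      case True then show ?thesis using c1 j by auto
    next
      case False
      then have "j - p \<in> {1..d-p}" using j by auto
      then have "c (j - p + p) = 0" by (rule c2)
      then show ?thesis using False by simp
    qed
  qed
qed


lemma sum_sc_apply: "(\<Sum>v\<in>A. sc (u v) (f v)) i = (\<Sum>v\<in>A. u v * f v i)"
  by (simp add: sum_fun_apply sc_def)

lemma indep_union:
  assumes fS: "finite S" and fT: "finite T" and iS: "V.independent S" and iT: "V.independent T"
    and sS: "\<forall>s\<in>S. supp p s" and zT: "\<forall>t\<in>T. \<forall>i\<le>p. t i = 0"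
  shows "V.independent (S \<union> T)"
proof
  assume "V.dependent (S \<union> T)"
  then obtain u v0 where u: "v0 \<in> S \<union> T" "u v0 \<noteq> 0" "(\<Sum>v\<in>S \<union> T. sc (u v) v) = 0"
    using V.dependent_finite[of "S \<union> T"] fS fT by auto
  have disj: "S \<inter> T = {}"
  proof (rule ccontr)
    assume "S \<inter> T \<noteq> {}"
    then obtain x where x: "x \<in> S" "x \<in> T" by auto
    have "x = 0"
    proof
      fix i show "x i = 0 i"
        using sS x zT by (cases "i \<le> p") (auto simp: supp_def)
    qed
    then show False using x iS V.dependent_zero by blast
  qed
  define a where "a = (\<Sum>v\<in>S. sc (u v) v)"
  define b where "b = (\<Sum>v\<in>T. sc (u v) v)"
  have ab: "a + b = 0" using u(3) unfolding a_def b_def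
    by (simp add: sum.union_disjoint[OF fS fT disj])
  have bz: "b i = 0" if "i \<le> p" for i
    unfolding b_def sum_sc_apply using zT that by (auto intro!: sum.neutral)
  have az: "a = 0"
  proof
    fix i show "a i = 0 i"
    proof (cases "i \<in> {1..p}")
      case True
      then show ?thesis using fun_cong[OF ab, of i] bz[of i] by simp
    next
      case False
      then show ?thesis unfolding a_def sum_sc_apply using sS by (auto simp: supp_def intro!: sum.neutral)
    qed
  qed
  then have bz2: "b = 0" using ab by simp
  have "\<forall>v\<in>S. u v = 0" using az iS V.dependent_finite[OF fS] unfolding a_def by blast
  moreover have "\<forall>v\<in>T. u v = 0" using bz2 iT V.dependent_finite[OF fT] unfolding b_def by blast
  ultimately show False using u(1,2) by blast
qed

lemma iota_sum: "iota p (\<Sum>v\<in>A. f v) = (\<Sum>v\<in>A. iota p (f v))"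
  by (auto simp: iota_def fun_eq_iff sum_fun_apply)

lemma iota_sc: "iota p (sc c x) = sc c (iota p x)"
  by (auto simp: iota_def fun_eq_iff sc_def)

lemma iota_add: "iota p (x + y) = iota p x + iota p y"
  by (auto simp: iota_def fun_eq_iff)

lemma iota_inj: "supp n x \<Longrightarrow> supp n y \<Longrightarrow> iota p x = iota p y \<Longrightarrow> x = y"
proof
  fix i assume a: "supp n x" "supp n y" "iota p x = iota p y"
  show "x i = y i"
  proof (cases "i = 0")
    case True
    have "x 0 = 0" "y 0 = 0" using a(1,2) unfolding supp_def by (metis atLeastAtMost_iff not_one_le_zero)+
    then show ?thesis using True by simp
  next
    case False then show ?thesis using fun_cong[OF a(3), of "i+p"] by (simp add: iota_def)
  qed
qed

lemma indep_iota:
  assumes fB: "finite B" and iB: "V.independent B" and sB: "\<forall>b\<in>B. supp n b"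
  shows "V.independent (iota p ` B)" "inj_on (iota p) B"
proof -
  show inj: "inj_on (iota p) B" using sB iota_inj by (meson inj_onI)
  show "V.independent (iota p ` B)"
  proof
    assume "V.dependent (iota p ` B)"
    then obtain u where u: "\<exists>v\<in>iota p ` B. u v \<noteq> 0" "(\<Sum>v\<in>iota p ` B. sc (u v) v) = 0"
      using V.dependent_finite[of "iota p ` B"] fB by auto
    define s where "s = (\<Sum>b\<in>B. sc (u (iota p b)) b)"
    have "(\<Sum>v\<in>iota p ` B. sc (u v) v) = (\<Sum>b\<in>B. sc (u (iota p b)) (iota p b))"
      using sum.reindex[OF inj, of "\<lambda>v. sc (u v) v"] by simp
    also have "\<dots> = iota p s" unfolding s_def iota_sum iota_sc ..
    finally have is0: "iota p s = 0" using u(2) by simp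
    have ss: "supp n s"
      unfolding supp_def s_def sum_sc_apply
    proof (intro allI impI)
      fix i assume "(\<Sum>b\<in>B. u (iota p b) * b i) \<noteq> 0"
      then obtain b where "b \<in> B" "u (iota p b) * b i \<noteq> 0" by (rule sum.not_neutral_contains_not_neutral)
      then have "b \<in> B" "b i \<noteq> 0" by auto
      then show "i \<in> {1..n}" using sB by (auto simp: supp_def)
    qed
    have "s = 0" using iota_inj[OF ss supp_0, of p] is0 by (simp add: iota_def fun_eq_iff)
    moreover have W: "\<forall>w. (\<Sum>v\<in>B. sc (w v) v) = 0 \<longrightarrow> (\<forall>v\<in>B. w v = 0)"
      using iB V.dependent_finite[OF fB] by blast
    ultimately have "\<forall>b\<in>B. u (iota p b) = 0" unfolding s_def
      using spec[OF W, of "\<lambda>b. u (iota p b)"] by simp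
    then show False using u(1) by blast
  qed
qed

lemma unitv_inj: "inj unitv"
  by (rule injI) (metis unitv_def zero_neq_one)

lemma indep_unitv: "V.independent (unitv ` {1..p})"
proof
  assume "V.dependent (unitv ` {1..p})"
  then obtain u where u: "\<exists>v\<in>unitv ` {1..p}. u v \<noteq> 0" "(\<Sum>v\<in>unitv ` {1..p}. sc (u v) v) = 0"
    using V.dependent_finite[of "unitv ` {1..p}"] by auto
  have "(\<Sum>v\<in>unitv ` {1..p}. sc (u v) v) = (\<Sum>i\<in>{1..p}. sc (u (unitv i)) (unitv i))"
    using sum.reindex[OF inj_on_subset[OF unitv_inj], of "{1..p}" "\<lambda>v. sc (u v) v"] by simp
  then have z: "(\<Sum>i\<in>{1..p}. sc (u (unitv i)) (unitv i)) = 0" using u(2) by simp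
  have "u (unitv i) = 0" if "i \<in> {1..p}" for i
  proof -
    have "(\<Sum>k\<in>{1..p}. sc (u (unitv k)) (unitv k)) i = (\<Sum>k\<in>{1..p}. if k = i then u (unitv k) else 0)"
      unfolding sum_sc_apply by (intro sum.cong) (auto simp: unitv_def)
    also have "\<dots> = u (unitv i)" using that by (simp add: sum.delta')
    finally show ?thesis using z by simp
  qed
  then show False using u(1) by blast
qed

lemma supp_in_span_unitv: "supp p e \<Longrightarrow> e \<in> V.span (unitv ` {1..p})"
proof -
  assume e: "supp p e"
  have "e = (\<Sum>i\<in>{1..p}. sc (e i) (unitv i))"
  proof
    fix k
    have "(\<Sum>i\<in>{1..p}. sc (e i) (unitv i)) k = (\<Sum>i\<in>{1..p}. if i = k then e i else 0)"
      unfolding sum_sc_apply by (intro sum.cong) (auto simp: unitv_def)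
    also have "\<dots> = e k" using e by (auto simp: sum.delta supp_def)
    finally show "e k = (\<Sum>i\<in>{1..p}. sc (e i) (unitv i)) k" by simp
  qed
  also have "\<dots> \<in> V.span (unitv ` {1..p})"
    by (intro V.span_sum V.span_scale V.span_base) auto
  finally show ?thesis .
qed

lemma iota_span: "u \<in> V.span B \<Longrightarrow> iota p u \<in> V.span (iota p ` B)"
proof (induction rule: V.span_induct_alt)
  case base
  have "iota p 0 = 0" by (simp add: iota_def fun_eq_iff)
  then show ?case by (simp only: V.span_zero)
next
  case (step c x y)
  have "iota p x \<in> V.span (iota p ` B)" using step(1) by (intro V.span_base imageI)
  then show ?case unfolding iota_add iota_sc using step(2)
    by (intro V.span_add V.span_scale)
qed

lemma proj_colspan:
  assumes "p + n \<le> N"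
  shows "proj p n ` colspan N d M = colspan n d (\<lambda>i j. M (i+p) j)"
proof
  show "proj p n ` colspan N d M \<subseteq> colspan n d (\<lambda>i j. M (i+p) j)"
  proof
    fix x assume "x \<in> proj p n ` colspan N d M"
    then obtain c where x: "x = proj p n (\<lambda>i. if i \<in> {1..N} then \<Sum>j=1..d. c j * M i j else 0)"
      unfolding colspan_def by blast
    have "x = (\<lambda>i. if i \<in> {1..n} then \<Sum>j=1..d. c j * M (i+p) j else 0)"
      using assms by (auto simp: x proj_def fun_eq_iff)
    then show "x \<in> colspan n d (\<lambda>i j. M (i+p) j)" unfolding colspan_def mem_Collect_eq by (rule exI[of _ c])
  qed
  show "colspan n d (\<lambda>i j. M (i+p) j) \<subseteq> proj p n ` colspan N d M"
  proof
    fix x assume "x \<in> colspan n d (\<lambda>i j. M (i+p) j)"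
    then obtain c where x: "x = (\<lambda>i. if i \<in> {1..n} then \<Sum>j=1..d. c j * M (i+p) j else 0)"
      unfolding colspan_def by blast
    have "x = proj p n (\<lambda>i. if i \<in> {1..N} then \<Sum>j=1..d. c j * M i j else 0)"
      using assms by (auto simp: x proj_def fun_eq_iff)
    moreover have "(\<lambda>i. if i \<in> {1..N} then \<Sum>j=1..d. c j * M i j else 0) \<in> colspan N d M"
      unfolding colspan_def mem_Collect_eq by (rule exI[of _ c]) (rule refl)
    ultimately show "x \<in> proj p n ` colspan N d M" by blast
  qed
qed

lemma col_proj: "p + n \<le> N \<Longrightarrow> col n (\<lambda>i j. M (i+p) j) j = proj p n (col N M j)"
  by (auto simp: col_def proj_def fun_eq_iff)

lemma D1:
  assumes fr: "frame N d M" and pd: "p \<le> d" and pnN: "p + n \<le> N"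
    and Ep: "\<forall>e. supp p e \<longrightarrow> e \<in> colspan N d M"
    and sv: "\<forall>v\<in>colspan N d M. supp (p+n) v"
  obtains H where "frame n (d-p) H" "colspan n (d-p) H = proj p n ` colspan N d M"
    "\<forall>t\<in>{1..d-p}. \<exists>j\<in>{1..d}. col n H t = proj p n (col N M j)"
proof -
  define PM where "PM = (\<lambda>i j. M (i+p) j)"
  define P where "P = col n PM ` {1..d}"
  have U: "proj p n ` colspan N d M = V.span P"
  proof -
    have "proj p n ` colspan N d M = colspan n d PM" by (simp add: proj_colspan[OF pnN] PM_def)
    also have "\<dots> = V.span P" by (simp only: colspan_span P_def)
    finally show ?thesis .
  qed
  obtain B where B: "B \<subseteq> P" "V.independent B" "P \<subseteq> V.span B"
    using V.maximal_independent_subset[of P] by blast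
  have fB: "finite B" using B(1) P_def finite_subset by blast
  have spB: "V.span B = V.span P"
  proof
    show "V.span B \<subseteq> V.span P" using B(1) V.span_mono by blast
    show "V.span P \<subseteq> V.span B" using B(3) V.span_minimal V.subspace_span by blast
  qed
  have "\<forall>b\<in>P. supp n b" unfolding P_def by (auto simp: col_def supp_def)
  then have sB: "\<forall>b\<in>B. supp n b" using B(1) by blast
  define W where "W = unitv ` {1..p} \<union> iota p ` B"
  have VPsi: "Psi p (V.span P) = colspan N d M"
    using Psi_proj[OF Ep sv] U by simp
  have iW: "V.independent W" unfolding W_def
  proof (rule indep_union)
    show "V.independent (unitv ` {1..p})" by (rule indep_unitv)
    show "V.independent (iota p ` B)" using indep_iota[OF fB B(2) sB] by blast
    show "\<forall>s\<in>unitv ` {1..p}. supp p s" by (auto simp: unitv_def supp_def)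
    show "\<forall>t\<in>iota p ` B. \<forall>i\<le>p. t i = 0" by (auto simp: iota_def)
  qed (use fB in auto)
  have cW: "card W = p + card B"
  proof -
    have "unitv ` {1..p} \<inter> iota p ` B = {}"
    proof (rule ccontr)
      assume "unitv ` {1..p} \<inter> iota p ` B \<noteq> {}"
      then obtain i b where "i \<in> {1..p}" "b \<in> B" "unitv i = iota p b" by blast
      then have "unitv i i = iota p b i" by simp
      then show False using \<open>i \<in> {1..p}\<close> by (auto simp: unitv_def iota_def)
    qed
    then have "card W = card (unitv ` {1..p}) + card (iota p ` B)"
      unfolding W_def using fB by (intro card_Un_disjoint) auto
    also have "card (unitv ` {1..p}) = p"
      using card_image[OF inj_on_subset[OF unitv_inj, of "{1..p}"]] by simp
    also have "card (iota p ` B) = card B"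
      using card_image[OF indep_iota(2)[OF fB B(2) sB]] .
    finally show ?thesis .
  qed
  have fW: "finite W" unfolding W_def using fB by auto
  have "colspan N d M \<subseteq> V.span W"
  proof
    fix v assume "v \<in> colspan N d M"
    then obtain e u where v: "v = e + iota p u" "supp p e" "u \<in> V.span P"
      unfolding VPsi[symmetric] Psi_def by blast
    have "e \<in> V.span W"
      using supp_in_span_unitv[OF v(2)] V.span_mono[of "unitv ` {1..p}" W] unfolding W_def by blast
    moreover have "iota p u \<in> V.span W"
      using iota_span[of u B p] v(3) spB V.span_mono[of "iota p ` B" W] unfolding W_def by blast
    ultimately show "v \<in> V.span W" using v(1) V.span_add by blast
  qed
  then have le1: "d \<le> p + card B"
    using V.independent_span_bound[OF fW frame_independent[OF fr]] frame_card[OF fr] cW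
      colspan_span[of N d M] V.span_superset[of "col N M ` {1..d}"] by auto
  have "W \<subseteq> colspan N d M"
  proof
    fix x assume "x \<in> W"
    then consider i where "i \<in> {1..p}" "x = unitv i" | b where "b \<in> B" "x = iota p b"
      unfolding W_def by blast
    then show "x \<in> colspan N d M"
    proof cases
      case 1 then show ?thesis using Ep by (auto simp: supp_def unitv_def)
    next
      case 2
      have "0 + iota p b \<in> Psi p (V.span P)" unfolding Psi_def
        using 2 B(1) V.span_base[of b P] supp_0 by blast
      then show ?thesis using 2 VPsi by simp
    qed
  qed
  then have le2: "p + card B \<le> d"
    using V.independent_span_bound[OF _ iW, of "col N M ` {1..d}"] frame_card[OF fr] cW
      colspan_span[of N d M] by auto
  have cB: "card B = d - p" using le1 le2 by simp
  obtain H where H: "frame n (d-p) H" "colspan n (d-p) H = V.span B" "\<forall>t\<in>{1..d-p}. col n H t \<in> B"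
    using frame_from_basis[OF fB cB B(2) sB] by blast
  have "\<forall>t\<in>{1..d-p}. \<exists>j\<in>{1..d}. col n H t = proj p n (col N M j)"
  proof
    fix t assume "t \<in> {1..d-p}"
    then have "col n H t \<in> P" using H(3) B(1) by blast
    then show "\<exists>j\<in>{1..d}. col n H t = proj p n (col N M j)"
      unfolding P_def PM_def using col_proj[OF pnN] by auto
  qed
  then show ?thesis using that H(1) H(2) spB U by simp
qed


lemma T1:
  assumes pd: "p \<le> d" and pnN: "p + n \<le> N" and U: "U \<in> gclosure n (d-p) S"
  shows "Psi p U \<in> gclosure N d (Psi p ` S)"
proof -
  obtain H F where H: "frame n (d-p) H" "U = colspan n (d-p) H"
    "\<forall>k. frame n (d-p) (F k) \<and> colspan n (d-p) (F k) \<in> S"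
    "\<forall>i j. (\<lambda>k. F k i j) \<longlonglongrightarrow> H i j"
    using U unfolding gclosure_def by blast
  have "frame N d (Ext p n d H)" using frame_Ext[OF pd pnN H(1)] .
  moreover have "Psi p U = colspan N d (Ext p n d H)" using colspan_Ext[OF pd pnN] H(2) by simp
  moreover have "\<forall>k. frame N d (Ext p n d (F k)) \<and> colspan N d (Ext p n d (F k)) \<in> Psi p ` S"
    using H(3) frame_Ext[OF pd pnN] colspan_Ext[OF pd pnN] by auto
  moreover have "\<forall>i j. (\<lambda>k. Ext p n d (F k) i j) \<longlonglongrightarrow> Ext p n d H i j"
  proof (intro allI)
    fix i j
    show "(\<lambda>k. Ext p n d (F k) i j) \<longlonglongrightarrow> Ext p n d H i j"
      by (cases "j \<in> {1..p}"; cases "j \<in> {p+1..d} \<and> i \<in> {p+1..p+n}")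
         (simp_all only: Ext_def if_True if_False simp_thms H(4) tendsto_const)
  qed
  ultimately show ?thesis unfolding gclosure_def mem_Collect_eq
    by (intro exI[of _ "Ext p n d H"] exI[of _ "\<lambda>k. Ext p n d (F k)"] conjI)
qed

lemma col_in_colspan: "j \<in> {1..d} \<Longrightarrow> col N M j \<in> colspan N d M"
  unfolding colspan_span by (rule V.span_base) auto

lemma Psi_supp: assumes "supp p e" "supp n u" shows "supp (p+n) (e + iota p u)"
  unfolding supp_def
proof (intro allI impI)
  fix i assume i: "(e + iota p u) i \<noteq> 0"
  show "i \<in> {1..p+n}"
  proof (cases "e i = 0")
    case False then show ?thesis using assms(1) by (auto simp: supp_def)
  next
    case True
    then have "p < i" "u (i - p) \<noteq> 0" using i by (auto simp: iota_def split: if_splits)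
    then have "i - p \<in> {1..n}" using assms(2) by (auto simp: supp_def)
    then show ?thesis using \<open>p < i\<close> by auto
  qed
qed

lemma struct_frame:
  assumes pnN: "p + n \<le> N" and fr: "frame N d F" and sU: "\<forall>u\<in>U. supp n u"
    and eq: "colspan N d F = Psi p U"
  shows "\<forall>v\<in>colspan N d F. supp (p+n) v" "\<forall>e. supp p e \<longrightarrow> e \<in> colspan N d F"
    "\<forall>i j. p + n < i \<longrightarrow> F i j = 0"
proof -
  show sv: "\<forall>v\<in>colspan N d F. supp (p+n) v"
    using sU Psi_supp unfolding eq Psi_def by blast
  show "\<forall>e. supp p e \<longrightarrow> e \<in> colspan N d F"
  proof (intro allI impI)
    fix e assume e: "supp p e"
    have "0 \<in> colspan N d F" using subspace_colspan unfolding V.subspace_def by blast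
    then obtain e' u where "0 = e' + iota p u" "supp p e'" "u \<in> U" unfolding eq Psi_def by blast
    then have "e + iota p u \<in> colspan N d F" "0 + iota p u \<in> colspan N d F"
      using e supp_0 unfolding eq Psi_def by blast+
    from colspan_diff[OF this] show "e \<in> colspan N d F" by simp
  qed
  show "\<forall>i j. p + n < i \<longrightarrow> F i j = 0"
  proof (intro allI impI)
    fix i j assume i: "p + n < i"
    show "F i j = 0"
    proof (cases "i \<in> {1..N} \<and> j \<in> {1..d}")
      case True
      then have "supp (p+n) (col N F j)" using sv col_in_colspan by blast
      then have "col N F j i \<noteq> 0 \<longrightarrow> i \<in> {1..p+n}" unfolding supp_def by blast
      then have "col N F j i = 0" using i by auto
      then show ?thesis using True by (simp add: col_def)
    next
      case False then show ?thesis using frame_supp[OF fr] by blast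
    qed
  qed
qed

lemma T2:
  assumes pd: "p \<le> d" and pnN: "p + n \<le> N" and sS: "\<forall>U\<in>S. \<forall>u\<in>U. supp n u"
    and V: "V \<in> gclosure N d (Psi p ` S)"
  shows "\<exists>U \<in> gclosure n (d-p) S. V = Psi p U"
proof -
  obtain M F where MF: "frame N d M" "V = colspan N d M"
    "\<forall>k. frame N d (F k) \<and> colspan N d (F k) \<in> Psi p ` S"
    "\<forall>i j. (\<lambda>k. F k i j) \<longlonglongrightarrow> M i j"
    using V unfolding gclosure_def by blast
  have "\<forall>k. \<exists>U. U \<in> S \<and> colspan N d (F k) = Psi p U" using MF(3) by blast
  then obtain Uk where Uk: "\<forall>k. Uk k \<in> S \<and> colspan N d (F k) = Psi p (Uk k)" by metis
  have frF: "\<forall>k. frame N d (F k)" using MF(3) by blast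
  have stF: "\<forall>v\<in>colspan N d (F k). supp (p+n) v" "\<forall>e. supp p e \<longrightarrow> e \<in> colspan N d (F k)"
     "\<forall>i j. p + n < i \<longrightarrow> F k i j = 0" for k
  proof -
    have "\<forall>u\<in>Uk k. supp n u" using sS Uk by blast
    note sf = struct_frame[OF pnN frF[rule_format, of k] this Uk[rule_format, THEN conjunct2]]
    show "\<forall>v\<in>colspan N d (F k). supp (p+n) v" by (rule sf(1))
    show "\<forall>e. supp p e \<longrightarrow> e \<in> colspan N d (F k)" by (rule sf(2))
    show "\<forall>i j. p + n < i \<longrightarrow> F k i j = 0" by (rule sf(3))
  qed
  have Mz: "M i j = 0" if "p + n < i" for i j
  proof -
    have "(\<lambda>k. F k i j) = (\<lambda>k. 0)" using stF(3) that by auto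
    then show ?thesis using MF(4) LIMSEQ_unique tendsto_const by metis
  qed
  have svM: "\<forall>v\<in>colspan N d M. supp (p+n) v"
  proof
    fix v assume "v \<in> colspan N d M"
    then obtain c where c: "v = (\<lambda>i. if i \<in> {1..N} then \<Sum>j=1..d. c j * M i j else 0)"
      unfolding colspan_def by blast
    show "supp (p+n) v" unfolding supp_def
    proof (intro allI impI)
      fix i assume "v i \<noteq> 0"
      then have "i \<in> {1..N}" "(\<Sum>j=1..d. c j * M i j) \<noteq> 0" using c by (auto split: if_splits)
      then have "\<not> p + n < i" using Mz by auto
      then show "i \<in> {1..p+n}" using \<open>i \<in> {1..N}\<close> by auto
    qed
  qed
  have EpM: "\<forall>e. supp p e \<longrightarrow> e \<in> colspan N d M"
  proof (intro allI impI)
    fix e assume "supp p e"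
    then have "\<forall>k. e \<in> colspan N d (F k)" using stF(2) by blast
    then show "e \<in> colspan N d M"
      using closed_colspan[OF MF(1) frF MF(4), of "\<lambda>k. e" e] by simp
  qed
  obtain H where H: "frame n (d-p) H" "colspan n (d-p) H = proj p n ` colspan N d M"
    "\<forall>t\<in>{1..d-p}. \<exists>j\<in>{1..d}. col n H t = proj p n (col N M j)"
    by (rule D1[OF MF(1) pd pnN EpM svM])
  have "\<forall>k. \<exists>G. frame n (d-p) G \<and> colspan n (d-p) G = proj p n ` colspan N d (F k)"
  proof
    fix k
    obtain G where "frame n (d-p) G" "colspan n (d-p) G = proj p n ` colspan N d (F k)"
      "\<forall>t\<in>{1..d-p}. \<exists>j\<in>{1..d}. col n G t = proj p n (col N (F k) j)"
      by (rule D1[OF frF[rule_format, of k] pd pnN stF(2) stF(1)])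
    then show "\<exists>G. frame n (d-p) G \<and> colspan n (d-p) G = proj p n ` colspan N d (F k)" by blast
  qed
  then obtain G where G: "\<forall>k. frame n (d-p) (G k) \<and> colspan n (d-p) (G k) = proj p n ` colspan N d (F k)"
    by metis
  have GU: "colspan n (d-p) (G k) = Uk k" for k
    using G Uk proj_Psi sS by metis
  obtain \<phi> where phi: "\<forall>t\<in>{1..d-p}. \<phi> t \<in> {1..d} \<and> col n H t = proj p n (col N M (\<phi> t))"
    using H(3) by metis
  define Hk where "Hk k = (\<lambda>r t. if t \<in> {1..d-p} then proj p n (col N (F k) (\<phi> t)) r else 0)" for k
  have supHk: "\<forall>k r t. Hk k r t \<noteq> 0 \<longrightarrow> r \<in> {1..n} \<and> t \<in> {1..d-p}"
    by (auto simp: Hk_def proj_def split: if_splits)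
  have limHk: "\<forall>r t. (\<lambda>k. Hk k r t) \<longlonglongrightarrow> H r t"
  proof (intro allI)
    fix r t
    show "(\<lambda>k. Hk k r t) \<longlonglongrightarrow> H r t"
    proof (cases "t \<in> {1..d-p} \<and> r \<in> {1..n}")
      case True
      have "H r t = col n H t r" using True by (simp add: col_def)
      also have "\<dots> = proj p n (col N M (\<phi> t)) r" using phi True by simp
      finally have Hrt: "H r t = (if r + p \<in> {1..N} then M (r+p) (\<phi> t) else 0)"
        using True by (simp add: proj_def col_def)
      have "(\<lambda>k. Hk k r t) = (\<lambda>k. if r + p \<in> {1..N} then F k (r+p) (\<phi> t) else 0)"
        using True by (simp add: Hk_def proj_def col_def)
      moreover have "r + p \<in> {1..N}" using True pnN by auto
      ultimately show ?thesis unfolding Hrt using MF(4) by simp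
    next
      case False
      then have "H r t = 0" using frame_supp[OF H(1)] by blast
      moreover have "(\<lambda>k. Hk k r t) = (\<lambda>k. 0)" using supHk False by blast
      ultimately show ?thesis by simp
    qed
  qed
  obtain K where K: "\<forall>k\<ge>K. frame n (d-p) (Hk k)"
    using frame_open[OF H(1) supHk limHk] by blast
  have colHk: "colspan n (d-p) (Hk k) = Uk k" if "k \<ge> K" for k
  proof -
    have "col n (Hk k) ` {1..d-p} \<subseteq> colspan n (d-p) (G k)"
    proof
      fix x assume "x \<in> col n (Hk k) ` {1..d-p}"
      then obtain t where t: "t \<in> {1..d-p}" "x = col n (Hk k) t" by blast
      then have "x = proj p n (col N (F k) (\<phi> t))"
        by (auto simp: col_def Hk_def proj_def fun_eq_iff)
      moreover have "col N (F k) (\<phi> t) \<in> colspan N d (F k)"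
        using phi t col_in_colspan by blast
      ultimately show "x \<in> colspan n (d-p) (G k)" using G by blast
    qed
    then have "colspan n (d-p) (Hk k) \<subseteq> colspan n (d-p) (G k)"
      unfolding colspan_span[of n "d-p" "Hk k"] using subspace_colspan V.span_minimal by blast
    then have "colspan n (d-p) (Hk k) = colspan n (d-p) (G k)"
      using D2 K that G by blast
    then show ?thesis using GU by simp
  qed
  define U where "U = colspan n (d-p) H"
  have "V = Psi p U" unfolding U_def H(2) MF(2) using Psi_proj[OF EpM svM] by simp
  moreover have "U \<in> gclosure n (d-p) S"
  proof -
    have "\<forall>k. frame n (d-p) (Hk (k+K)) \<and> colspan n (d-p) (Hk (k+K)) \<in> S"
      using K colHk Uk by simp
    moreover have "\<forall>r t. (\<lambda>k. Hk (k+K) r t) \<longlonglongrightarrow> H r t"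
      using limHk LIMSEQ_ignore_initial_segment by blast
    ultimately show ?thesis unfolding gclosure_def mem_Collect_eq U_def
      by (intro exI[of _ H] exI[of _ "\<lambda>k. Hk (k+K)"] conjI H(1) refl)
  qed
  ultimately show ?thesis by blast
qed


lemma mv_add: "mv N g (x + y) = mv N g x + mv N g y"
  by (auto simp: mv_def fun_eq_iff sum.distrib algebra_simps)

lemma mv_diff: "mv N g (x - y) = mv N g x - mv N g y"
  by (auto simp: mv_def fun_eq_iff sum_subtractf algebra_simps)

lemma mv_zero: "mv N g 0 = 0"
  by (auto simp: mv_def fun_eq_iff)

lemma supp_mv: "supp N (mv N g v)"
  by (auto simp: mv_def supp_def)

lemma mv_assoc: "mv N (matmul N a b) v = mv N a (mv N b v)"
proof
  fix i
  show "mv N (matmul N a b) v i = mv N a (mv N b v) i"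
  proof (cases "i \<in> {1..N}")
    case True
    have "mv N (matmul N a b) v i = (\<Sum>j=1..N. (\<Sum>k=1..N. a i k * b k j) * v j)"
      using True by (auto simp: mv_def matmul_def intro!: sum.cong)
    also have "\<dots> = (\<Sum>j=1..N. \<Sum>k=1..N. a i k * (b k j * v j))"
      by (simp add: sum_distrib_right mult.assoc)
    also have "\<dots> = (\<Sum>k=1..N. \<Sum>j=1..N. a i k * (b k j * v j))"
      by (rule sum.swap)
    also have "\<dots> = (\<Sum>k=1..N. a i k * (\<Sum>j=1..N. b k j * v j))"
      by (simp add: sum_distrib_left)
    also have "\<dots> = mv N a (mv N b v) i"
      using True by (auto simp: mv_def intro!: sum.cong)
    finally show ?thesis .
  next
    case False then show ?thesis by (auto simp: mv_def)
  qed
qed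

lemma mv_ident: "supp N v \<Longrightarrow> mv N (ident N) v = v"
proof
  fix i assume s: "supp N v"
  show "mv N (ident N) v i = v i"
  proof (cases "i \<in> {1..N}")
    case True
    have "(\<Sum>j=1..N. ident N i j * v j) = (\<Sum>j=1..N. if j = i then v j else 0)"
      using True by (intro sum.cong) (auto simp: ident_def)
    then show ?thesis using True by (simp add: mv_def sum.delta')
  next
    case False then show ?thesis using s by (auto simp: mv_def supp_def)
  qed
qed

lemma GL_inj: assumes "g \<in> GL N" "supp N v" "mv N g v = 0" shows "v = 0"
proof -
  obtain h where h: "matmul N h g = ident N" using assms(1) unfolding GL_def by blast
  have "v = mv N (ident N) v" using mv_ident[OF assms(2)] by simp
  also have "\<dots> = mv N h (mv N g v)" using h mv_assoc by metis
  also have "\<dots> = 0" using assms(3) mv_zero by simp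
  finally show ?thesis .
qed

lemma GL_inj2: assumes "g \<in> GL N" "supp N v" "supp N v'" "mv N g v = mv N g v'" shows "v = v'"
proof -
  have "supp N (v - v')" unfolding supp_def
  proof (intro allI impI)
    fix i assume "(v - v') i \<noteq> 0"
    then have "v i \<noteq> 0 \<or> v' i \<noteq> 0" by auto
    then show "i \<in> {1..N}" using assms(2,3) unfolding supp_def by blast
  qed
  moreover have "mv N g (v - v') = 0" using assms(4) by (simp add: mv_diff)
  ultimately show ?thesis using GL_inj[OF assms(1)] by fastforce
qed

definition mm :: "nat \<Rightarrow> (nat\<Rightarrow>nat\<Rightarrow>complex) \<Rightarrow> (nat\<Rightarrow>nat\<Rightarrow>complex) \<Rightarrow> (nat\<Rightarrow>nat\<Rightarrow>complex)" where
  "mm N g C = (\<lambda>i j. if i \<in> {1..N} then (\<Sum>k=1..N. g i k * C k j) else 0)"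

lemma mv_comb: "mv N g (\<lambda>i. if i \<in> {1..N} then \<Sum>j=1..r. c j * C i j else 0)
      = (\<lambda>i. if i \<in> {1..N} then \<Sum>j=1..r. c j * mm N g C i j else 0)"
proof
  fix i
  show "mv N g (\<lambda>i. if i \<in> {1..N} then \<Sum>j=1..r. c j * C i j else 0) i
    = (if i \<in> {1..N} then \<Sum>j=1..r. c j * mm N g C i j else 0)"
  proof (cases "i \<in> {1..N}")
    case True
    have "mv N g (\<lambda>i. if i \<in> {1..N} then \<Sum>j=1..r. c j * C i j else 0) i
        = (\<Sum>k=1..N. g i k * (\<Sum>j=1..r. c j * C k j))"
      using True by (auto simp: mv_def intro!: sum.cong)
    also have "\<dots> = (\<Sum>k=1..N. \<Sum>j=1..r. c j * (g i k * C k j))"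
      by (simp add: sum_distrib_left algebra_simps)
    also have "\<dots> = (\<Sum>j=1..r. \<Sum>k=1..N. c j * (g i k * C k j))"
      by (rule sum.swap)
    also have "\<dots> = (\<Sum>j=1..r. c j * mm N g C i j)"
      using True by (simp add: mm_def sum_distrib_left)
    finally show ?thesis using True by simp
  next
    case False then show ?thesis by (auto simp: mv_def)
  qed
qed

lemma mv_colspan: "mv N g ` colspan N r C = colspan N r (mm N g C)"
  unfolding colspan_def image_def using mv_comb by auto

lemma frame_mm:
  assumes g: "g \<in> GL N" and fr: "frame N r C"
  shows "frame N r (mm N g C)"
  unfolding frame_def
proof (rule conjI; intro allI impI)
  fix i j assume a: "mm N g C i j \<noteq> 0"
  then have i: "i \<in> {1..N}" by (auto simp: mm_def split: if_splits)
  have "j \<in> {1..r}"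
  proof (rule ccontr)
    assume "j \<notin> {1..r}"
    then have Cz: "\<And>k. C k j = 0" using frame_supp[OF fr] by blast
    have "mm N g C i j = 0" by (simp add: mm_def Cz)
    then show False using a by simp
  qed
  then show "i \<in> {1..N} \<and> j \<in> {1..r}" using i by simp
next
  fix c :: "nat \<Rightarrow> complex" assume c: "\<forall>i. (\<Sum>j=1..r. c j * mm N g C i j) = 0"
  define v where "v = (\<lambda>i. if i \<in> {1..N} then \<Sum>j=1..r. c j * C i j else 0)"
  have "mv N g v = 0" unfolding v_def mv_comb using c by (auto simp: fun_eq_iff)
  moreover have "supp N v" by (auto simp: v_def supp_def)
  ultimately have v0: "v = 0" using GL_inj[OF g] by blast
  have "\<forall>i. (\<Sum>j=1..r. c j * C i j) = 0"
  proof
    fix i show "(\<Sum>j=1..r. c j * C i j) = 0"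
    proof (cases "i \<in> {1..N}")
      case True then show ?thesis using fun_cong[OF v0, of i] by (simp add: v_def)
    next
      case False
      then have "\<And>j. C i j = 0" using frame_supp[OF fr] by blast
      then show ?thesis by simp
    qed
  qed
  then show "\<forall>j\<in>{1..r}. c j = 0" using frame_indep[OF fr] by blast
qed


definition upper :: "(nat\<Rightarrow>nat\<Rightarrow>complex) \<Rightarrow> bool" where
  "upper g \<longleftrightarrow> (\<forall>i j. j < i \<longrightarrow> g i j = 0)"

lemma borel_iff: "g \<in> Defs.borel N \<longleftrightarrow> g \<in> GL N \<and> upper g"
  by (simp add: Defs.borel_def upper_def)

lemma upper_supp: assumes "upper g" "supp p e" shows "supp p (mv N g e)"
  unfolding supp_def
proof (intro allI impI)
  fix i assume a: "mv N g e i \<noteq> 0"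
  then have "(\<Sum>j=1..N. g i j * e j) \<noteq> 0" by (auto simp: mv_def split: if_splits)
  then obtain j where "g i j * e j \<noteq> 0" by (meson sum.not_neutral_contains_not_neutral)
  then have "g i j \<noteq> 0" "e j \<noteq> 0" by auto
  then have "\<not> j < i" "j \<in> {1..p}" using assms unfolding upper_def supp_def by blast+
  moreover have "i \<ge> 1" using a by (auto simp: mv_def split: if_splits)
  ultimately show "i \<in> {1..p}" by auto
qed

definition Ip :: "nat \<Rightarrow> nat \<Rightarrow> nat \<Rightarrow> complex" where
  "Ip p = (\<lambda>i j. if i = j \<and> j \<in> {1..p} then 1 else 0)"

lemma Ip_comb: "p \<le> N \<Longrightarrow> (\<lambda>i. if i \<in> {1..N} then \<Sum>j=1..p. c j * Ip p i j else 0)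
   = (\<lambda>i. if i \<in> {1..p} then c i else 0)"
proof
  fix i assume pN: "p \<le> N"
  have "(\<Sum>j=1..p. c j * Ip p i j) = (\<Sum>j=1..p. if j = i then c j else 0)"
    by (intro sum.cong) (auto simp: Ip_def)
  then show "(if i \<in> {1..N} then \<Sum>j=1..p. c j * Ip p i j else 0) = (if i \<in> {1..p} then c i else 0)"
    using pN by (auto simp: sum.delta')
qed

lemma colspan_Ip: "p \<le> N \<Longrightarrow> colspan N p (Ip p) = {e. supp p e}"
proof
  assume pN: "p \<le> N"
  show "colspan N p (Ip p) \<subseteq> {e. supp p e}"
    unfolding colspan_def Ip_comb[OF pN] by (auto simp: supp_def split: if_splits)
  show "{e. supp p e} \<subseteq> colspan N p (Ip p)"
  proof
    fix e assume "e \<in> {e. supp p e}"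
    then have "e = (\<lambda>i. if i \<in> {1..p} then e i else 0)" by (auto simp: supp_def fun_eq_iff)
    then show "e \<in> colspan N p (Ip p)" unfolding colspan_def Ip_comb[OF pN] mem_Collect_eq
      by (rule exI[of _ e])
  qed
qed

lemma frame_Ip: "p \<le> N \<Longrightarrow> frame N p (Ip p)"
  unfolding frame_def
proof (rule conjI; intro allI impI)
  fix i j assume "p \<le> N" "Ip p i j \<noteq> 0"
  then show "i \<in> {1..N} \<and> j \<in> {1..p}" by (auto simp: Ip_def split: if_splits)
next
  fix c :: "nat \<Rightarrow> complex" assume pN: "p \<le> N" and c: "\<forall>i. (\<Sum>j=1..p. c j * Ip p i j) = 0"
  show "\<forall>j\<in>{1..p}. c j = 0"
  proof
    fix j assume j: "j \<in> {1..p}"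
    have "(if j \<in> {1..N} then \<Sum>k=1..p. c k * Ip p j k else 0) = (if j \<in> {1..p} then c j else 0)"
      using fun_cong[OF Ip_comb[OF pN], of j] by simp
    then show "c j = 0" using j c pN by (simp split: if_splits)
  qed
qed

lemma upper_surj:
  assumes g: "g \<in> GL N" "upper g" and pN: "p \<le> N" and e: "supp p e"
  shows "\<exists>e'. supp p e' \<and> mv N g e' = e"
proof -
  have "colspan N p (mm N g (Ip p)) \<subseteq> colspan N p (Ip p)"
    unfolding mv_colspan[symmetric] colspan_Ip[OF pN] using upper_supp[OF g(2)] by blast
  then have eq: "colspan N p (mm N g (Ip p)) = colspan N p (Ip p)"
    using D2 frame_mm[OF g(1) frame_Ip[OF pN]] frame_Ip[OF pN] by blast
  have "e \<in> colspan N p (Ip p)" using e colspan_Ip[OF pN] by simp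
  then have "e \<in> colspan N p (mm N g (Ip p))" using eq by simp
  then have "e \<in> mv N g ` colspan N p (Ip p)" by (simp only: mv_colspan)
  then obtain e' where "e' \<in> colspan N p (Ip p)" "e = mv N g e'" by blast
  then show ?thesis using colspan_Ip[OF pN] by auto
qed

lemma mv_col: "j \<in> {1..N} \<Longrightarrow> mv N g (col N h j) = col N (matmul N g h) j"
  by (auto simp: mv_def col_def matmul_def fun_eq_iff intro!: sum.cong)

lemma col_ident: "j \<in> {1..N} \<Longrightarrow> col N (ident N) j = unitv j"
  by (auto simp: col_def ident_def unitv_def fun_eq_iff)

lemma inv_upper:
  assumes g: "g \<in> GL N" "upper g" and h: "sqmat N h" "matmul N g h = ident N"
  shows "upper h"
  unfolding upper_def
proof (intro allI impI)
  fix i j :: nat assume ji: "j < i"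
  show "h i j = 0"
  proof (cases "i \<in> {1..N} \<and> j \<in> {1..N}")
    case True
    then have jN: "j \<le> N" "j \<in> {1..N}" by auto
    have "supp j (unitv j)" using jN by (auto simp: supp_def unitv_def)
    then obtain e' where e': "supp j e'" "mv N g e' = unitv j" using upper_surj[OF g jN(1)] by blast
    have "mv N g (col N h j) = unitv j" using mv_col[OF jN(2)] h(2) col_ident[OF jN(2)] by simp
    moreover have "supp N (col N h j)" "supp N e'" using e' jN by (auto simp: col_def supp_def)
    ultimately have "col N h j = e'" using GL_inj2[OF g(1)] e'(2) by metis
    then have "col N h j i = 0" using e'(1) ji by (auto simp: supp_def)
    then show ?thesis using True by (simp add: col_def)
  next
    case False then show ?thesis using h(1) unfolding sqmat_def by blast
  qed
qed


abbreviation sub :: "nat \<Rightarrow> nat \<Rightarrow> (nat\<Rightarrow>nat\<Rightarrow>complex) \<Rightarrow> (nat\<Rightarrow>nat\<Rightarrow>complex)" where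
  "sub p n g \<equiv> principal_sub p (p+n) g"

lemma sub_entry: "sub p n g i j = (if i \<in> {1..n} \<and> j \<in> {1..n} then g (i+p) (j+p) else 0)"
  by (simp add: principal_sub_def)

lemma mv_out: "i \<notin> {1..N} \<Longrightarrow> mv N g v i = 0"
  unfolding mv_def by (simp only: if_not_P if_False)

lemma sum_block:
  fixes p n N :: nat
  assumes pnN: "p + n \<le> N" and z: "\<And>k. k \<in> {1..N} \<Longrightarrow> k \<notin> {p+1..p+n} \<Longrightarrow> f k = 0"
  shows "(\<Sum>k=1..N. f k) = (\<Sum>k=1..n. f (k+p))"
proof -
  have "(\<Sum>k=1..N. f k) = (\<Sum>k\<in>{1+p..n+p}. f k)"
  proof (rule sum.mono_neutral_right)
    show "finite {1..N}" by simp
    show "{1+p..n+p} \<subseteq> {1..N}" using pnN by auto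
    show "\<forall>i\<in>{1..N} - {1+p..n+p}. f i = 0" using z by auto
  qed
  also have "\<dots> = (\<Sum>k=1..n. f (k+p))" by (rule sum.shift_bounds_cl_nat_ivl)
  finally show ?thesis .
qed

lemma sub_inverse:
  assumes g: "upper g" and h: "upper h" and gh: "matmul N g h = ident N" and pnN: "p + n \<le> N"
  shows "matmul n (sub p n g) (sub p n h) = ident n"
proof (intro ext)
  fix i j
  show "matmul n (sub p n g) (sub p n h) i j = ident n i j"
  proof (cases "i \<in> {1..n} \<and> j \<in> {1..n}")
    case True
    have "ident n i j = ident N (i+p) (j+p)" using True pnN by (auto simp: ident_def)
    also have "\<dots> = (\<Sum>k=1..N. g (i+p) k * h k (j+p))"
      using gh[symmetric] True pnN by (simp add: matmul_def)
    also have "\<dots> = (\<Sum>k=1..n. g (i+p) (k+p) * h (k+p) (j+p))"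
    proof (rule sum_block[OF pnN])
      fix k assume "k \<in> {1..N}" "k \<notin> {p+1..p+n}"
      then consider "k \<le> p" | "k > p + n" by fastforce
      then show "g (i+p) k * h k (j+p) = 0"
      proof cases
        case 1 then have "k < i + p" using True by auto
        then show ?thesis using g unfolding upper_def by simp
      next
        case 2 then have "j + p < k" using True by auto
        then show ?thesis using h unfolding upper_def by simp
      qed
    qed
    also have "\<dots> = matmul n (sub p n g) (sub p n h) i j"
      using True by (auto simp: matmul_def sub_entry intro!: sum.cong)
    finally show ?thesis by simp
  next
    case False
    have "matmul n (sub p n g) (sub p n h) i j = 0"
      unfolding matmul_def using False by (simp only: if_False)
    moreover have "ident n i j = 0" unfolding ident_def using False by auto
    ultimately show ?thesis by simp
  qed
qed

lemma upper_sub: "upper g \<Longrightarrow> upper (sub p n g)"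
  by (auto simp: upper_def sub_entry)

lemma sqmat_sub: "sqmat n (sub p n g)"
  by (auto simp: sqmat_def sub_entry split: if_splits)

lemma sub_borel:
  assumes g: "g \<in> Defs.borel N" and pnN: "p + n \<le> N"
  shows "sub p n g \<in> Defs.borel n"
proof -
  obtain h where h: "sqmat N h" "matmul N g h = ident N" "matmul N h g = ident N"
    using g unfolding borel_iff GL_def by blast
  have ug: "upper g" "g \<in> GL N" using g borel_iff by auto
  have uh: "upper h" using inv_upper[OF ug(2) ug(1) h(1) h(2)] .
  have "matmul n (sub p n g) (sub p n h) = ident n" by (rule sub_inverse[OF ug(1) uh h(2) pnN])
  moreover have "matmul n (sub p n h) (sub p n g) = ident n" by (rule sub_inverse[OF uh ug(1) h(3) pnN])
  ultimately have "sub p n g \<in> GL n" unfolding GL_def using sqmat_sub by blast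
  then show ?thesis using upper_sub[OF ug(1)] borel_iff by blast
qed

lemma row_iota:
  assumes u: "supp n u" and pnN: "p + n \<le> N" and r: "r \<in> {1..n}"
  shows "mv N g (iota p u) (r+p) = mv n (sub p n g) u r"
proof -
  have "mv N g (iota p u) (r+p) = (\<Sum>j=1..N. g (r+p) j * iota p u j)"
    using r pnN by (simp add: mv_def)
  also have "\<dots> = (\<Sum>j=1..n. g (r+p) (j+p) * iota p u (j+p))"
  proof (rule sum_block[OF pnN])
    fix k assume "k \<in> {1..N}" "k \<notin> {p+1..p+n}"
    then have "iota p u k = 0" using u by (auto simp: iota_def supp_def)
    then show "g (r+p) k * iota p u k = 0" by simp
  qed
  also have "\<dots> = mv n (sub p n g) u r"
    using r by (auto simp: mv_def sub_entry iota_def intro!: sum.cong)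
  finally show ?thesis .
qed

lemma row_iota_high:
  assumes g: "upper g" and u: "supp n u" and i: "p + n < i"
  shows "mv N g (iota p u) i = 0"
proof -
  have "(\<Sum>j=1..N. g i j * iota p u j) = 0"
  proof (rule sum.neutral, rule ballI)
    fix j assume "j \<in> {1..N}"
    show "g i j * iota p u j = 0"
    proof (cases "j < i")
      case True then show ?thesis using g by (simp add: upper_def)
    next
      case False then have "iota p u j = 0" using u i by (auto simp: iota_def supp_def)
      then show ?thesis by simp
    qed
  qed
  then show ?thesis by (simp add: mv_def)
qed

lemma supp_diff: "supp p a \<Longrightarrow> supp p b \<Longrightarrow> supp p (a - b)"
  unfolding supp_def by (metis diff_self minus_apply)

lemma decomp_iota:
  assumes g: "upper g" and u: "supp n u" and pnN: "p + n \<le> N"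
  shows "mv N g (iota p u) = (\<lambda>i. if i \<le> p then mv N g (iota p u) i else 0) + iota p (mv n (sub p n g) u)"
proof
  fix i
  show "mv N g (iota p u) i = ((\<lambda>i. if i \<le> p then mv N g (iota p u) i else 0) + iota p (mv n (sub p n g) u)) i"
  proof (cases "i \<le> p")
    case True then show ?thesis by (simp add: iota_def)
  next
    case False
    show ?thesis
    proof (cases "i \<le> p + n")
      case True
      then have "i - p \<in> {1..n}" using False by auto
      from row_iota[OF u pnN this, of g] show ?thesis using False by (simp add: iota_def)
    next
      case F2: False
      then have "i - p \<notin> {1..n}" by auto
      then have "mv n (sub p n g) u (i - p) = 0" by (rule mv_out)
      then show ?thesis using row_iota_high[OF g u] F2 False by (simp add: iota_def)
    qed
  qed
qed

lemma supp_low: "supp p (\<lambda>i. if i \<le> p then mv N g v i else 0)"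
  by (auto simp: supp_def mv_def split: if_splits)

lemma KEY2:
  assumes g: "g \<in> Defs.borel N" and sU: "\<forall>u\<in>U. supp n u" and pnN: "p + n \<le> N"
  shows "mv N g ` Psi p U = Psi p (mv n (sub p n g) ` U)"
proof
  have ug: "upper g" "g \<in> GL N" using g borel_iff by auto
  show "mv N g ` Psi p U \<subseteq> Psi p (mv n (sub p n g) ` U)"
  proof
    fix x assume "x \<in> mv N g ` Psi p U"
    then obtain e u where x: "x = mv N g (e + iota p u)" "supp p e" "u \<in> U"
      unfolding Psi_def by blast
    define r where "r = (\<lambda>i. if i \<le> p then mv N g (iota p u) i else 0)"
    have D: "mv N g (iota p u) = r + iota p (mv n (sub p n g) u)"
      unfolding r_def by (rule decomp_iota[OF ug(1) sU[rule_format, OF x(3)] pnN])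
    have "x = (mv N g e + r) + iota p (mv n (sub p n g) u)"
      unfolding x(1) mv_add D by (simp add: add.assoc)
    moreover have "supp p (mv N g e + r)"
      unfolding r_def by (intro supp_add upper_supp[OF ug(1) x(2)] supp_low)
    ultimately show "x \<in> Psi p (mv n (sub p n g) ` U)" unfolding Psi_def using x(3) by blast
  qed
  show "Psi p (mv n (sub p n g) ` U) \<subseteq> mv N g ` Psi p U"
  proof
    fix x assume "x \<in> Psi p (mv n (sub p n g) ` U)"
    then obtain e u where x: "x = e + iota p (mv n (sub p n g) u)" "supp p e" "u \<in> U"
      unfolding Psi_def by blast
    define r where "r = (\<lambda>i. if i \<le> p then mv N g (iota p u) i else 0)"
    have "supp p (e - r)" unfolding r_def by (intro supp_diff x(2) supp_low)
    then obtain e' where e': "supp p e'" "mv N g e' = e - r"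
      using upper_surj[OF ug(2) ug(1)] pnN by (metis le_add1 le_trans)
    have D: "mv N g (iota p u) = r + iota p (mv n (sub p n g) u)"
      unfolding r_def by (rule decomp_iota[OF ug(1) sU[rule_format, OF x(3)] pnN])
    have "mv N g (e' + iota p u) = (e - r) + (r + iota p (mv n (sub p n g) u))"
      unfolding mv_add e'(2) D ..
    also have "\<dots> = x" using x(1) by (simp add: algebra_simps)
    finally have "mv N g (e' + iota p u) = x" .
    moreover have "e' + iota p u \<in> Psi p U" unfolding Psi_def using e'(1) x(3) by blast
    ultimately show "x \<in> mv N g ` Psi p U" by blast
  qed
qed


definition ext :: "nat \<Rightarrow> nat \<Rightarrow> nat \<Rightarrow> (nat\<Rightarrow>nat\<Rightarrow>complex) \<Rightarrow> (nat\<Rightarrow>nat\<Rightarrow>complex)" where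
  "ext p n N h = (\<lambda>i j. if i \<in> {1..N} \<and> j \<in> {1..N} then
      (if i \<in> {p+1..p+n} \<and> j \<in> {p+1..p+n} then h (i-p) (j-p) else if i = j then 1 else 0) else 0)"

lemma sub_ext: "sqmat n h \<Longrightarrow> p + n \<le> N \<Longrightarrow> sub p n (ext p n N h) = h"
  by (auto simp: fun_eq_iff sub_entry ext_def sqmat_def)

lemma ext_mult:
  assumes pnN: "p + n \<le> N"
  shows "matmul N (ext p n N a) (ext p n N b) = ext p n N (matmul n a b)"
proof (intro ext)
  fix i j
  show "matmul N (ext p n N a) (ext p n N b) i j = ext p n N (matmul n a b) i j"
  proof (cases "i \<in> {1..N} \<and> j \<in> {1..N}")
    case False
    have "matmul N (ext p n N a) (ext p n N b) i j = 0"
      unfolding matmul_def using False by (simp only: if_False)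
    moreover have "ext p n N (matmul n a b) i j = 0"
      unfolding ext_def using False by (simp only: if_False)
    ultimately show ?thesis by simp
  next
    case True
    have lhs: "matmul N (ext p n N a) (ext p n N b) i j = (\<Sum>k=1..N. ext p n N a i k * ext p n N b k j)"
      using True by (simp add: matmul_def)
    show ?thesis
    proof (cases "i \<in> {p+1..p+n}")
      case iB: True
      have "(\<Sum>k=1..N. ext p n N a i k * ext p n N b k j) = (\<Sum>k=1..n. ext p n N a i (k+p) * ext p n N b (k+p) j)"
      proof (rule sum_block[OF pnN])
        fix k assume "k \<in> {1..N}" "k \<notin> {p+1..p+n}"
        then have "ext p n N a i k = 0" using iB by (auto simp: ext_def)
        then show "ext p n N a i k * ext p n N b k j = 0" by simp
      qed
      also have "\<dots> = (\<Sum>k=1..n. a (i-p) k * ext p n N b (k+p) j)"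
        using iB pnN by (intro sum.cong) (auto simp: ext_def)
      finally have s: "(\<Sum>k=1..N. ext p n N a i k * ext p n N b k j) = (\<Sum>k=1..n. a (i-p) k * ext p n N b (k+p) j)" .
      show ?thesis
      proof (cases "j \<in> {p+1..p+n}")
        case jB: True
        have "(\<Sum>k=1..n. a (i-p) k * ext p n N b (k+p) j) = (\<Sum>k=1..n. a (i-p) k * b k (j-p))"
          using jB pnN by (intro sum.cong) (auto simp: ext_def)
        also have "\<dots> = ext p n N (matmul n a b) i j"
          using iB jB True by (auto simp: ext_def matmul_def)
        finally show ?thesis using lhs s by simp
      next
        case jB: False
        have "(\<Sum>k=1..n. a (i-p) k * ext p n N b (k+p) j) = 0"
          using jB by (intro sum.neutral) (auto simp: ext_def)
        moreover have "ext p n N (matmul n a b) i j = 0" using iB jB True by (auto simp: ext_def)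
        ultimately show ?thesis using lhs s by simp
      qed
    next
      case iB: False
      have "ext p n N a i k = (if k = i then 1 else 0)" if "k \<in> {1..N}" for k
        using iB True that unfolding ext_def by auto
      then have "(\<Sum>k=1..N. ext p n N a i k * ext p n N b k j) = (\<Sum>k=1..N. if k = i then ext p n N b k j else 0)"
        by (intro sum.cong) auto
      also have "\<dots> = ext p n N b i j" using True by (simp add: sum.delta')
      also have "\<dots> = ext p n N (matmul n a b) i j" using iB True by (auto simp: ext_def)
      finally show ?thesis using lhs by simp
    qed
  qed
qed

lemma ext_ident: "ext p n N (ident n) = ident N"
  by (auto simp: fun_eq_iff ext_def ident_def)

lemma sqmat_ext: "sqmat N (ext p n N h)"
  by (auto simp: sqmat_def ext_def split: if_splits)

lemma ext_GL: assumes "h \<in> GL n" "p + n \<le> N" shows "ext p n N h \<in> GL N"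
proof -
  obtain h' where h': "sqmat n h'" "matmul n h h' = ident n" "matmul n h' h = ident n"
    using assms(1) unfolding GL_def by blast
  have "matmul N (ext p n N h) (ext p n N h') = ident N"
    using ext_mult[OF assms(2)] h'(2) ext_ident by metis
  moreover have "matmul N (ext p n N h') (ext p n N h) = ident N"
    using ext_mult[OF assms(2)] h'(3) ext_ident by metis
  ultimately show ?thesis unfolding GL_def mem_Collect_eq
    by (intro conjI sqmat_ext exI[of _ "ext p n N h'"])
qed

lemma ext_upper: "upper h \<Longrightarrow> upper (ext p n N h)"
  unfolding upper_def ext_def by auto

lemma ext_borel: "h \<in> Defs.borel n \<Longrightarrow> p + n \<le> N \<Longrightarrow> ext p n N h \<in> Defs.borel N"
  using ext_GL ext_upper borel_iff by blast

lemma GL_row: assumes "g \<in> GL N" "i \<in> {1..N}" shows "\<exists>k. g i k \<noteq> 0"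
proof (rule ccontr)
  assume "\<not> (\<exists>k. g i k \<noteq> 0)"
  then have z: "\<And>k. g i k = 0" by blast
  obtain h where "matmul N g h = ident N" using assms(1) unfolding GL_def by blast
  then have "matmul N g h i i = 1" using assms(2) by (simp add: ident_def)
  then show False using assms(2) by (simp add: matmul_def z)
qed

lemma same_block_refl:
  assumes "g \<in> levi N js" "i \<in> {1..N}" shows "same_block js i i"
proof -
  have "g \<in> GL N" using assms(1) by (simp add: levi_def)
  then obtain k where "g i k \<noteq> 0" using GL_row assms(2) by blast
  then have "same_block js i k" using assms(1) by (simp add: levi_def)
  then show ?thesis unfolding same_block_def by blast
qed

lemma ext_levi:
  assumes g: "g \<in> levi N js" and hGL: "sub p n g \<in> GL n" and pnN: "p + n \<le> N"
  shows "ext p n N (sub p n g) \<in> levi N js"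
  unfolding levi_def mem_Collect_eq
proof (intro conjI allI impI)
  show "ext p n N (sub p n g) \<in> GL N" by (rule ext_GL[OF hGL pnN])
  fix i j assume nz: "ext p n N (sub p n g) i j \<noteq> 0"
  then have ij: "i \<in> {1..N}" "j \<in> {1..N}" by (auto simp: ext_def split: if_splits)
  show "same_block js i j"
  proof (cases "i \<in> {p+1..p+n} \<and> j \<in> {p+1..p+n}")
    case True
    then have "i - p \<in> {1..n}" "j - p \<in> {1..n}" "i - p + p = i" "j - p + p = j" by auto
    then have "ext p n N (sub p n g) i j = g i j" using True ij unfolding ext_def sub_entry
      by (simp only: if_True simp_thms)
    then have "g i j \<noteq> 0" using nz by simp
    then show ?thesis using g by (simp add: levi_def)
  next
    case False
    then have "i = j" using nz ij by (auto simp: ext_def split: if_splits)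
    then show ?thesis using same_block_refl[OF g ij(1)] by simp
  qed
qed


lemma red_p_prop:
  shows "red_p w \<le> length w" "\<forall>i\<in>{1..red_p w}. w!(i-1) = i"
proof -
  let ?P = "\<lambda>p. p \<le> length w \<and> (\<forall>i\<in>{1..p}. w!(i-1) = i)"
  have "?P 0" by simp
  then have "?P (Greatest ?P)" by (rule GreatestI_nat[of _ _ "length w"]) blast
  then show "red_p w \<le> length w" "\<forall>i\<in>{1..red_p w}. w!(i-1) = i" unfolding red_p_def by blast+
qed

lemma red_p_max:
  assumes "red_p w < length w" shows "w ! (red_p w) \<noteq> red_p w + 1"
proof
  assume a: "w ! (red_p w) = red_p w + 1"
  let ?P = "\<lambda>p. p \<le> length w \<and> (\<forall>i\<in>{1..p}. w!(i-1) = i)"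
  have "?P (red_p w + 1)"
  proof (intro conjI ballI)
    show "red_p w + 1 \<le> length w" using assms by simp
    fix i assume i: "i \<in> {1..red_p w + 1}"
    show "w ! (i - 1) = i"
    proof (cases "i = red_p w + 1")
      case True then show ?thesis using a by simp
    next
      case False then show ?thesis using red_p_prop(2) i by auto
    qed
  qed
  then have "red_p w + 1 \<le> Greatest ?P" by (rule Greatest_le_nat[of _ _ "length w"]) blast
  then show False unfolding red_p_def by simp
qed

lemma w_ge:
  assumes "sorted_wrt (<) w" "set w \<subseteq> {1..N}"
  shows "t < length w \<Longrightarrow> t + 1 \<le> w ! t"
proof (induction t)
  case 0 then show ?case using assms(2) nth_mem[OF 0] by fastforce
next
  case (Suc t)
  then have "w ! t < w ! Suc t" using sorted_wrt_nth_less[OF assms(1)] by simp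
  then show ?case using Suc by simp
qed

lemma w_le_last:
  fixes w :: "nat list"
  assumes "sorted_wrt (<) w" "t < length w" shows "w ! t \<le> last w"
proof -
  have "w \<noteq> []" using assms(2) by auto
  then have "last w = w ! (length w - 1)" by (simp add: last_conv_nth)
  moreover have "t \<le> length w - 1" using assms(2) by simp
  show ?thesis
  proof (cases "t = length w - 1")
    case True then show ?thesis using \<open>last w = _\<close> by simp
  next
    case False
    then have "t < length w - 1" using \<open>t \<le> length w - 1\<close> by simp
    then have "w ! t < w ! (length w - 1)" using sorted_wrt_nth_less[OF assms(1)] assms(2) by simp
    then show ?thesis using \<open>last w = _\<close> by simp
  qed
qed

lemma p1_notin:
  assumes w: "w \<in> Iseq d N"
  shows "red_p w + 1 \<notin> set w"
proof
  let ?p = "red_p w"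
  assume "?p + 1 \<in> set w"
  then obtain t where t: "t < length w" "w ! t = ?p + 1" by (auto simp: in_set_conv_nth)
  have sw: "sorted_wrt (<) w" "set w \<subseteq> {1..N}" using w by (auto simp: Iseq_def)
  show False
  proof (cases "t < ?p")
    case True
    then have "t + 1 \<in> {1..red_p w}" by simp
    then have "w ! ((t+1) - 1) = t + 1" using red_p_prop(2)[of w] by blast
    then show False using t True by simp
  next
    case False
    then have pl: "?p < length w" using t by simp
    have wp: "w ! ?p \<ge> ?p + 1" using w_ge[OF sw pl] .
    have "w ! ?p \<noteq> ?p + 1" by (rule red_p_max[OF pl])
    then have "w ! ?p \<ge> ?p + 2" using wp by simp
    moreover have "w ! ?p \<le> w ! t"
      using False sorted_wrt_nth_less[OF sw(1), of ?p t] t by (cases "t = ?p") auto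
    ultimately show False using t by simp
  qed
qed

definition cmat :: "nat list \<Rightarrow> nat \<Rightarrow> nat \<Rightarrow> complex" where
  "cmat w = (\<lambda>i j. if j \<in> {1..length w} \<and> i = w!(j-1) then 1 else 0)"

lemma coord_plane_cmat: "coord_plane N w = colspan N (length w) (cmat w)"
  by (simp add: coord_plane_def cmat_def)

lemma frame_cmat:
  assumes "sorted_wrt (<) w" "set w \<subseteq> {1..N}"
  shows "frame N (length w) (cmat w)"
  unfolding frame_def
proof (rule conjI; intro allI impI)
  fix i j assume "cmat w i j \<noteq> 0"
  then have "j \<in> {1..length w}" "i = w ! (j-1)" by (auto simp: cmat_def split: if_splits)
  moreover have "w ! (j-1) \<in> set w" using \<open>j \<in> {1..length w}\<close> by (intro nth_mem) auto
  ultimately show "i \<in> {1..N} \<and> j \<in> {1..length w}" using assms(2) by auto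
next
  fix c :: "nat \<Rightarrow> complex" assume c: "\<forall>i. (\<Sum>j=1..length w. c j * cmat w i j) = 0"
  have dist: "distinct w" using assms(1) by (simp add: strict_sorted_iff)
  show "\<forall>j\<in>{1..length w}. c j = 0"
  proof
    fix j0 assume j0: "j0 \<in> {1..length w}"
    have "(\<Sum>j=1..length w. c j * cmat w (w!(j0-1)) j) = (\<Sum>j=1..length w. if j = j0 then c j else 0)"
    proof (intro sum.cong refl)
      fix j assume j: "j \<in> {1..length w}"
      have "w!(j0-1) = w!(j-1) \<longleftrightarrow> j0 - 1 = j - 1" using nth_eq_iff_index_eq[OF dist] j j0 by auto
      then show "c j * cmat w (w!(j0-1)) j = (if j = j0 then c j else 0)" using j j0 by (auto simp: cmat_def)
    qed
    also have "\<dots> = c j0" using j0 by (simp add: sum.delta')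
    finally show "c j0 = 0" using c by simp
  qed
qed

lemma len_red_w: "length (red_w w) = length w - red_p w"
  by (simp add: red_w_def)

lemma nth_red_w: "t < length w - red_p w \<Longrightarrow> red_w w ! t = w ! (red_p w + t) - red_p w"
  by (simp add: red_w_def)

lemma wfacts:
  assumes w: "w \<in> Iseq d N" and d: "1 \<le> d"
  shows "length w = d" "sorted_wrt (<) w" "set w \<subseteq> {1..N}" "red_p w \<le> d"
    "\<And>t. t < d \<Longrightarrow> t + 1 \<le> w ! t" "\<And>t. t < d \<Longrightarrow> w ! t \<le> last w"
    "last w \<le> N" "red_p w \<le> last w" "\<And>i. i \<in> {1..red_p w} \<Longrightarrow> w ! (i-1) = i"
proof -
  show l: "length w = d" and s: "sorted_wrt (<) w" and st: "set w \<subseteq> {1..N}" using w by (auto simp: Iseq_def)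
  show "red_p w \<le> d" using red_p_prop(1)[of w] l by simp
  show ge: "\<And>t. t < d \<Longrightarrow> t + 1 \<le> w ! t" using w_ge[OF s st] l by simp
  show le: "\<And>t. t < d \<Longrightarrow> w ! t \<le> last w" using w_le_last[OF s] l by simp
  have ne: "w \<noteq> []" using l d by auto
  then show "last w \<le> N" using st last_in_set by fastforce
  have "d \<le> last w" using ge[of "d-1"] le[of "d-1"] d by simp
  then show "red_p w \<le> last w" using red_p_prop(1)[of w] l by simp
  show "\<And>i. i \<in> {1..red_p w} \<Longrightarrow> w ! (i-1) = i" using red_p_prop(2)[of w] by blast
qed

lemma cmat_Ext:
  assumes w: "w \<in> Iseq d N" and d: "1 \<le> d"
  shows "cmat w = Ext (red_p w) (last w - red_p w) d (cmat (red_w w))"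
proof (intro ext)
  fix i j
  note wf = wfacts[OF w d]
  let ?p = "red_p w" and ?m = "last w"
  show "cmat w i j = Ext ?p (?m - ?p) d (cmat (red_w w)) i j"
  proof (cases "j \<in> {1..?p}")
    case True
    then have "w ! (j-1) = j" using wf(9) by blast
    then show ?thesis using True wf(1,4) by (auto simp: cmat_def Ext_def)
  next
    case F1: False
    show ?thesis
    proof (cases "j \<in> {?p+1..d}")
      case True
      have j1: "j - 1 < d" using True by auto
      have wj: "j \<le> w ! (j-1)" "w ! (j-1) \<le> ?m" using wf(5)[OF j1] wf(6)[OF j1] True by auto
      have lenb: "length (red_w w) = d - ?p" using len_red_w wf(1) by simp
      have jb: "j - ?p \<in> {1..length (red_w w)}" using True lenb by auto
      have nb: "red_w w ! (j - ?p - 1) = w ! (j-1) - ?p"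
      proof -
        have "j - ?p - 1 < length w - ?p" using True wf(1) by auto
        then have "red_w w ! (j - ?p - 1) = w ! (?p + (j - ?p - 1)) - ?p" by (rule nth_red_w)
        moreover have "?p + (j - ?p - 1) = j - 1" using True by auto
        ultimately show ?thesis by simp
      qed
      have "Ext ?p (?m - ?p) d (cmat (red_w w)) i j
          = (if i \<in> {?p+1..?p+(?m-?p)} then cmat (red_w w) (i - ?p) (j - ?p) else 0)"
        using F1 True by (simp add: Ext_def)
      also have "\<dots> = (if i = w ! (j-1) then 1 else 0)"
      proof -
        have eqv: "\<And>i. ?p + 1 \<le> i \<Longrightarrow> (i - ?p = w!(j-1) - ?p) = (i = w!(j-1))"
          using wj True by linarith
        show ?thesis using jb nb wj True wf(8) eqv by (auto simp: cmat_def)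
      qed
      also have "\<dots> = cmat w i j" using True wf(1) by (auto simp: cmat_def)
      finally show ?thesis by simp
    next
      case False
      then have "j \<notin> {1..d}" using F1 by auto
      then show ?thesis using F1 False wf(1) by (auto simp: cmat_def Ext_def)
    qed
  qed
qed


lemma colspan_supp: "v \<in> colspan n r C \<Longrightarrow> supp n v"
  by (auto simp: colspan_def supp_def split: if_splits)

lemma gclosure_supp: "U \<in> gclosure n r S \<Longrightarrow> \<forall>u\<in>U. supp n u"
  unfolding gclosure_def using colspan_supp by blast

lemma gclosure_zero: "U \<in> gclosure n r S \<Longrightarrow> 0 \<in> U"
  unfolding gclosure_def using subspace_colspan unfolding V.subspace_def by blast

lemma red_d_eq: "w \<in> Iseq d N \<Longrightarrow> red_d w = d - red_p w"
  by (simp add: red_d_def Iseq_def)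

lemma red_N_eq: "red_N w = last w - red_p w"
  by (simp add: red_N_def)

lemma Vw_eq:
  assumes w: "w \<in> Iseq d N" and d: "1 \<le> d"
  shows "coord_plane N w = Psi (red_p w) (coord_plane (red_N w) (red_w w))"
proof -
  note wf = wfacts[OF w d]
  have pnN: "red_p w + (last w - red_p w) \<le> N" using wf(7,8) by simp
  have "coord_plane N w = colspan N d (cmat w)" using coord_plane_cmat wf(1) by simp
  also have "\<dots> = colspan N d (Ext (red_p w) (last w - red_p w) d (cmat (red_w w)))"
    using cmat_Ext[OF w d] by simp
  also have "\<dots> = Psi (red_p w) (colspan (last w - red_p w) (d - red_p w) (cmat (red_w w)))"
    by (rule colspan_Ext[OF wf(4) pnN])
  also have "\<dots> = Psi (red_p w) (coord_plane (red_N w) (red_w w))"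
    using coord_plane_cmat len_red_w wf(1) red_N_eq by simp
  finally show ?thesis .
qed

lemma orbit_borel:
  assumes w: "w \<in> Iseq d N" and d: "1 \<le> d"
  shows "Psi (red_p w) ` ((\<lambda>h. act (red_N w) h (coord_plane (red_N w) (red_w w))) ` Defs.borel (red_N w))
     = (\<lambda>g. act N g (coord_plane N w)) ` Defs.borel N"
proof -
  note wf = wfacts[OF w d]
  define p where "p = red_p w"
  define n where "n = red_N w"
  define Vb where "Vb = coord_plane n (red_w w)"
  have pnN: "p + n \<le> N" using wf(7,8) by (simp add: p_def n_def red_N_eq)
  have Vw: "coord_plane N w = Psi p Vb" using Vw_eq[OF w d] by (simp add: p_def n_def Vb_def)
  have sVb: "\<forall>u\<in>Vb. supp n u" unfolding Vb_def coord_plane_def using colspan_supp by blast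
  have "Psi p ` ((\<lambda>h. act n h Vb) ` Defs.borel n) = (\<lambda>g. act N g (Psi p Vb)) ` Defs.borel N"
  proof
    show "Psi p ` (\<lambda>h. act n h Vb) ` Defs.borel n \<subseteq> (\<lambda>g. act N g (Psi p Vb)) ` Defs.borel N"
    proof
      fix x assume "x \<in> Psi p ` (\<lambda>h. act n h Vb) ` Defs.borel n"
      then obtain h where h: "h \<in> Defs.borel n" "x = Psi p (act n h Vb)" by blast
      have sq: "sqmat n h" using h(1) unfolding borel_iff GL_def by blast
      have "x = Psi p (mv n (sub p n (ext p n N h)) ` Vb)" using h(2) sub_ext[OF sq pnN] by (simp add: act_mv)
      also have "\<dots> = mv N (ext p n N h) ` Psi p Vb"
        using KEY2[OF ext_borel[OF h(1) pnN] sVb pnN] by simp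
      finally have "x = act N (ext p n N h) (Psi p Vb)" by (simp add: act_mv)
      then show "x \<in> (\<lambda>g. act N g (Psi p Vb)) ` Defs.borel N" using ext_borel[OF h(1) pnN] by blast
    qed
    show "(\<lambda>g. act N g (Psi p Vb)) ` Defs.borel N \<subseteq> Psi p ` (\<lambda>h. act n h Vb) ` Defs.borel n"
    proof
      fix x assume "x \<in> (\<lambda>g. act N g (Psi p Vb)) ` Defs.borel N"
      then obtain g where g: "g \<in> Defs.borel N" "x = act N g (Psi p Vb)" by blast
      have "x = Psi p (act n (sub p n g) Vb)" using KEY2[OF g(1) sVb pnN] g(2) by (simp add: act_mv)
      then show "x \<in> Psi p ` (\<lambda>h. act n h Vb) ` Defs.borel n" using sub_borel[OF g(1) pnN] by blast
    qed
  qed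
  then show ?thesis unfolding Vw p_def n_def Vb_def .
qed

lemma Xw_eq:
  assumes w: "w \<in> Iseq d N" and d: "1 \<le> d"
  shows "schubert w d N = Psi (red_p w) ` schubert (red_w w) (red_d w) (red_N w)"
proof -
  note wf = wfacts[OF w d]
  define p where "p = red_p w"
  define n where "n = red_N w"
  define Ob where "Ob = (\<lambda>h. act n h (coord_plane n (red_w w))) ` Defs.borel n"
  have pnN: "p + n \<le> N" using wf(7,8) by (simp add: p_def n_def red_N_eq)
  have pd: "p \<le> d" using wf(4) by (simp add: p_def)
  have rd: "red_d w = d - p" using red_d_eq[OF w] by (simp add: p_def)
  have Xw: "schubert w d N = gclosure N d (Psi p ` Ob)"
    unfolding schubert_def Ob_def p_def n_def orbit_borel[OF w d] ..
  have Xb: "schubert (red_w w) (red_d w) (red_N w) = gclosure n (d-p) Ob"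
    unfolding schubert_def Ob_def n_def rd ..
  have sOb: "\<forall>U\<in>Ob. \<forall>u\<in>U. supp n u" unfolding Ob_def act_mv using supp_mv by blast
  have "gclosure N d (Psi p ` Ob) = Psi p ` gclosure n (d-p) Ob"
  proof
    show "gclosure N d (Psi p ` Ob) \<subseteq> Psi p ` gclosure n (d-p) Ob"
      using T2[OF pd pnN sOb] by blast
    show "Psi p ` gclosure n (d-p) Ob \<subseteq> gclosure N d (Psi p ` Ob)"
      using T1[OF pd pnN] by blast
  qed
  then show ?thesis unfolding Xw Xb p_def by simp
qed

lemma Ep_in_X:
  assumes w: "w \<in> Iseq d N" and d: "1 \<le> d" and V: "V \<in> schubert w d N" and e: "supp (red_p w) e"
  shows "e \<in> V"
proof -
  obtain U where U: "U \<in> schubert (red_w w) (red_d w) (red_N w)" "V = Psi (red_p w) U"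
    using V Xw_eq[OF w d] by blast
  have "0 \<in> U" using U(1) gclosure_zero unfolding schubert_def by blast
  moreover have "e = e + iota (red_p w) 0" by (simp add: iota_def fun_eq_iff)
  ultimately show ?thesis using U(2) e unfolding Psi_def by blast
qed

lemma ident_borel: "ident N \<in> Defs.borel N"
proof -
  have "matmul N (ident N) (ident N) = ident N"
  proof (intro ext)
    fix i j
    show "matmul N (ident N) (ident N) i j = ident N i j"
    proof (cases "i \<in> {1..N} \<and> j \<in> {1..N}")
      case True
      have "(\<Sum>k=1..N. ident N i k * ident N k j) = (\<Sum>k=1..N. if k = i then ident N k j else 0)"
        using True by (intro sum.cong) (auto simp: ident_def)
      also have "\<dots> = ident N i j" using True by (simp add: sum.delta')
      finally show ?thesis using True by (simp add: matmul_def)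
    next
      case False
      have "matmul N (ident N) (ident N) i j = 0"
        unfolding matmul_def using False by (simp only: if_False)
      moreover have "ident N i j = 0" unfolding ident_def using False by auto
      ultimately show ?thesis by simp
    qed
  qed
  moreover have "sqmat N (ident N)" by (auto simp: sqmat_def ident_def split: if_splits)
  ultimately have "ident N \<in> GL N" unfolding GL_def by blast
  moreover have "upper (ident N)" by (auto simp: upper_def ident_def)
  ultimately show ?thesis using borel_iff by blast
qed

lemma Vw_in_X:
  assumes w: "w \<in> Iseq d N" and d: "1 \<le> d"
  shows "coord_plane N w \<in> schubert w d N"
proof -
  note wf = wfacts[OF w d]
  have fr: "frame N d (cmat w)" using frame_cmat[OF wf(2,3)] wf(1) by simp
  have cp: "coord_plane N w = colspan N d (cmat w)" using coord_plane_cmat wf(1) by simp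
  have "act N (ident N) (coord_plane N w) = coord_plane N w"
    unfolding act_mv using mv_ident colspan_supp cp by (simp add: image_def)
  then have "colspan N d (cmat w) \<in> (\<lambda>g. act N g (coord_plane N w)) ` Defs.borel N"
    using ident_borel cp by (metis image_eqI)
  then show ?thesis unfolding schubert_def gclosure_def mem_Collect_eq cp
    by (intro exI[of _ "cmat w"] exI[of _ "\<lambda>k. cmat w"] conjI fr refl allI tendsto_const)
qed


lemma boundary:
  assumes w: "w \<in> Iseq d N" and d: "1 \<le> d"
    and st: "stable w d N (levi N js)" and g: "g \<in> levi N js" and gij: "g i j \<noteq> 0"
    and j: "j \<le> red_p w"
  shows "i \<le> red_p w"
proof (rule ccontr)
  assume "\<not> i \<le> red_p w"
  then have pi: "red_p w < i" by simp
  define p where "p = red_p w"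
  note wf = wfacts[OF w d]
  have gGL: "g \<in> GL N" using g by (simp add: levi_def)
  have iN: "i \<in> {1..N}" using gij gGL unfolding GL_def sqmat_def by blast
  obtain k where k: "Suc k < length js" "js!k < i" "i \<le> js!Suc k" "js!k < j" "j \<le> js!Suc k"
    using g gij unfolding levi_def same_block_def by blast
  have p1: "1 \<le> p" using k(4) j p_def by simp
  have p1N: "p + 1 \<le> N" using pi iN p_def by simp
  define tau where "tau a = (if a = p then p+1 else if a = p+1 then p else a)" for a
  have tt: "tau (tau a) = a" for a by (simp add: tau_def)
  have tauN: "a \<in> {1..N} \<Longrightarrow> tau a \<in> {1..N}" for a using p1 p1N by (auto simp: tau_def)
  define \<sigma> where "\<sigma> = (\<lambda>a b. if a \<in> {1..N} \<and> b \<in> {1..N} \<and> b = tau a then (1::complex) else 0)"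
  have sq: "sqmat N \<sigma>" by (auto simp: sqmat_def \<sigma>_def split: if_splits)
  have ss: "matmul N \<sigma> \<sigma> = ident N"
  proof (intro ext)
    fix a b
    show "matmul N \<sigma> \<sigma> a b = ident N a b"
    proof (cases "a \<in> {1..N} \<and> b \<in> {1..N}")
      case True
      have "(\<Sum>c=1..N. \<sigma> a c * \<sigma> c b) = (\<Sum>c=1..N. if c = tau a then \<sigma> c b else 0)"
        using True by (intro sum.cong) (auto simp: \<sigma>_def)
      also have "\<dots> = \<sigma> (tau a) b" using tauN True by (simp add: sum.delta')
      also have "\<dots> = ident N a b" using True tauN[of a] tt[of a]
        by (auto simp: \<sigma>_def ident_def)
      finally show ?thesis using True by (simp add: matmul_def)
    next
      case False
      have "matmul N \<sigma> \<sigma> a b = 0"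
        unfolding matmul_def using False by (simp only: if_False)
      moreover have "ident N a b = 0" unfolding ident_def using False by auto
      ultimately show ?thesis by simp
    qed
  qed
  have sGL: "\<sigma> \<in> GL N" unfolding GL_def using sq ss by blast
  have sL: "\<sigma> \<in> levi N js"
    unfolding levi_def mem_Collect_eq
  proof (intro conjI sGL allI impI)
    fix a b assume nz: "\<sigma> a b \<noteq> 0"
    then have ab: "a \<in> {1..N}" "b = tau a" by (auto simp: \<sigma>_def split: if_splits)
    show "same_block js a b"
    proof (cases "a = p \<or> a = p + 1")
      case True
      then have "(a = p \<and> b = p + 1) \<or> (a = p + 1 \<and> b = p)" using ab by (auto simp: tau_def)
      moreover have "js!k < p" "p + 1 \<le> js!Suc k" using k j pi p_def by auto
      ultimately show ?thesis unfolding same_block_def using k(1) by auto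
    next
      case False
      then have "b = a" using ab by (simp add: tau_def)
      then show ?thesis using same_block_refl[OF g ab(1)] by simp
    qed
  qed
  have Vw: "coord_plane N w \<in> schubert w d N" by (rule Vw_in_X[OF w d])
  then have X: "act N \<sigma> (coord_plane N w) \<in> schubert w d N" using st sL unfolding stable_def by blast
  have "supp p (unitv p)" using p1 by (auto simp: supp_def unitv_def)
  then have "unitv p \<in> act N \<sigma> (coord_plane N w)" using Ep_in_X[OF w d X] p_def by simp
  then obtain v where v: "v \<in> coord_plane N w" "unitv p = mv N \<sigma> v" unfolding act_mv by blast
  have "mv N \<sigma> v p = (\<Sum>b=1..N. \<sigma> p b * v b)" using p1 p1N by (simp add: mv_def)
  also have "\<dots> = (\<Sum>b=1..N. if b = p + 1 then v b else 0)"
    using p1 p1N by (intro sum.cong) (auto simp: \<sigma>_def tau_def)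
  also have "\<dots> = v (p+1)" using p1N by (simp add: sum.delta')
  also have "\<dots> = 0"
  proof -
    obtain c where c: "v = (\<lambda>i. if i \<in> {1..N} then \<Sum>j=1..length w. c j * cmat w i j else 0)"
      using v(1) unfolding coord_plane_cmat colspan_def by blast
    have "\<And>j. j \<in> {1..length w} \<Longrightarrow> cmat w (p+1) j = 0"
    proof -
      fix j assume "j \<in> {1..length w}"
      then have "w ! (j-1) \<in> set w" by (intro nth_mem) auto
      then have "w ! (j-1) \<noteq> p + 1" using p1_notin[OF w] p_def by metis
      then show "cmat w (p+1) j = 0" by (auto simp: cmat_def)
    qed
    then show ?thesis unfolding c by simp
  qed
  finally have "mv N \<sigma> v p = 0" .
  moreover have "unitv p p = 1" by (simp add: unitv_def)
  ultimately show False using v(2) by simp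
qed


lemma red_L_sub:
  assumes w: "w \<in> Iseq d N" and d: "1 \<le> d"
  shows "red_L w L = sub (red_p w) (red_N w) ` L"
proof -
  have "red_p w + (last w - red_p w) = last w" using wfacts(8)[OF w d] by simp
  then show ?thesis by (simp add: red_L_def red_N_eq)
qed

lemma proj_mv_Psi:
  assumes B: "\<forall>i j. g i j \<noteq> 0 \<longrightarrow> j \<le> p \<longrightarrow> i \<le> p" and pnN: "p + n \<le> N"
    and e: "supp p e" and u: "supp n u"
  shows "proj p n (mv N g (e + iota p u)) = mv n (sub p n g) u"
proof -
  have "supp p (mv N g e)" unfolding supp_def
  proof (intro allI impI)
    fix i assume a: "mv N g e i \<noteq> 0"
    then have i1: "i \<in> {1..N}" by (auto simp: mv_def split: if_splits)
    then have "(\<Sum>j=1..N. g i j * e j) \<noteq> 0" using a by (simp add: mv_def)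
    then obtain j where "g i j * e j \<noteq> 0" by (meson sum.not_neutral_contains_not_neutral)
    then have "g i j \<noteq> 0" "e j \<noteq> 0" by auto
    then have "i \<le> p" using B e unfolding supp_def by auto
    then show "i \<in> {1..p}" using i1 by auto
  qed
  then have "proj p n (mv N g e) = 0" by (rule proj_supp_p)
  moreover have "proj p n (mv N g (iota p u)) = mv n (sub p n g) u"
  proof
    fix r
    show "proj p n (mv N g (iota p u)) r = mv n (sub p n g) u r"
    proof (cases "r \<in> {1..n}")
      case True
      then show ?thesis using row_iota[OF u pnN True] by (simp add: proj_def)
    next
      case False
      have "proj p n (mv N g (iota p u)) r = 0" unfolding proj_def using False by (simp only: if_False)
      then show ?thesis using mv_out[OF False] by simp
    qed
  qed
  ultimately show ?thesis by (simp add: mv_add proj_add)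
qed

lemma stable_red:
  assumes w: "w \<in> Iseq d N" and d: "1 \<le> d" and st: "stable w d N (levi N js)"
  shows "stable (red_w w) (red_d w) (red_N w) (red_L w (levi N js))"
  unfolding stable_def
proof (intro ballI)
  fix h U assume h: "h \<in> red_L w (levi N js)" and U: "U \<in> schubert (red_w w) (red_d w) (red_N w)"
  define p where "p = red_p w"
  define n where "n = red_N w"
  note wf = wfacts[OF w d]
  have pnN: "p + n \<le> N" using wf(7,8) by (simp add: p_def n_def red_N_eq)
  obtain g where g: "g \<in> levi N js" "h = sub p n g" using h red_L_sub[OF w d] p_def n_def by blast
  have B: "\<forall>i j. g i j \<noteq> 0 \<longrightarrow> j \<le> p \<longrightarrow> i \<le> p" using boundary[OF w d st g(1)] p_def by blast
  have sU: "\<forall>u\<in>U. supp n u" using U gclosure_supp unfolding schubert_def n_def by blast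
  have "Psi p U \<in> schubert w d N" using U Xw_eq[OF w d] p_def by blast
  then have "act N g (Psi p U) \<in> schubert w d N" using st g(1) unfolding stable_def by blast
  then obtain U'' where U'': "U'' \<in> schubert (red_w w) (red_d w) (red_N w)" "act N g (Psi p U) = Psi p U''"
    using Xw_eq[OF w d] p_def by blast
  have sU'': "\<forall>u\<in>U''. supp n u" using U''(1) gclosure_supp unfolding schubert_def n_def by blast
  have "proj p n ` act N g (Psi p U) = mv n h ` U"
  proof
    show "proj p n ` act N g (Psi p U) \<subseteq> mv n h ` U"
    proof
      fix x assume "x \<in> proj p n ` act N g (Psi p U)"
      then obtain e u where "x = proj p n (mv N g (e + iota p u))" "supp p e" "u \<in> U"
        unfolding act_mv Psi_def by blast
      then show "x \<in> mv n h ` U" using proj_mv_Psi[OF B pnN] sU g(2) by auto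
    qed
    show "mv n h ` U \<subseteq> proj p n ` act N g (Psi p U)"
    proof
      fix x assume "x \<in> mv n h ` U"
      then obtain u where u: "u \<in> U" "x = mv n h u" by blast
      have "0 + iota p u \<in> Psi p U" unfolding Psi_def using u(1) supp_0 by blast
      moreover have "proj p n (mv N g (0 + iota p u)) = x"
        using proj_mv_Psi[OF B pnN supp_0 sU[rule_format, OF u(1)]] u(2) g(2) by simp
      ultimately show "x \<in> proj p n ` act N g (Psi p U)" unfolding act_mv by blast
    qed
  qed
  moreover have "proj p n ` Psi p U'' = U''" by (rule proj_Psi[OF sU''])
  ultimately have "act n h U = U''" using U''(2) by (simp add: act_mv n_def)
  then show "act (red_N w) h U \<in> schubert (red_w w) (red_d w) (red_N w)" using U''(1) n_def by simp
qed

lemma orbit_L: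
  assumes w: "w \<in> Iseq d N" and d: "1 \<le> d" and sU: "\<forall>u\<in>U0. supp (red_N w) u"
  shows "Psi (red_p w) ` ((\<lambda>h. act (red_N w) h U0) ` (red_L w (levi N js) \<inter> Defs.borel (red_N w)))
    = (\<lambda>g. act N g (Psi (red_p w) U0)) ` (levi N js \<inter> Defs.borel N)"
proof -
  define p where "p = red_p w"
  define n where "n = red_N w"
  note wf = wfacts[OF w d]
  have pnN: "p + n \<le> N" using wf(7,8) by (simp add: p_def n_def red_N_eq)
  have sU': "\<forall>u\<in>U0. supp n u" using sU n_def by simp
  have RL: "red_L w (levi N js) = sub p n ` levi N js" using red_L_sub[OF w d] p_def n_def by simp
  have "Psi p ` ((\<lambda>h. act n h U0) ` (sub p n ` levi N js \<inter> Defs.borel n))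
    = (\<lambda>g. act N g (Psi p U0)) ` (levi N js \<inter> Defs.borel N)"
  proof
    show "Psi p ` (\<lambda>h. act n h U0) ` (sub p n ` levi N js \<inter> Defs.borel n) \<subseteq> (\<lambda>g. act N g (Psi p U0)) ` (levi N js \<inter> Defs.borel N)"
    proof
      fix x assume "x \<in> Psi p ` (\<lambda>h. act n h U0) ` (sub p n ` levi N js \<inter> Defs.borel n)"
      then obtain g where g: "g \<in> levi N js" "sub p n g \<in> Defs.borel n" "x = Psi p (act n (sub p n g) U0)"
        by blast
      define h where "h = sub p n g"
      have hGL: "h \<in> GL n" using g(2) h_def borel_iff by blast
      have sq: "sqmat n h" using hGL unfolding GL_def by blast
      have eL: "ext p n N h \<in> levi N js" using ext_levi[OF g(1) _ pnN] hGL h_def by simp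
      have eB: "ext p n N h \<in> Defs.borel N" using ext_borel[OF g(2) pnN] h_def by simp
      have "x = Psi p (mv n (sub p n (ext p n N h)) ` U0)" using g(3) sub_ext[OF sq pnN] h_def by (simp add: act_mv)
      also have "\<dots> = mv N (ext p n N h) ` Psi p U0" using KEY2[OF eB sU' pnN] by simp
      finally have "x = act N (ext p n N h) (Psi p U0)" by (simp add: act_mv)
      then show "x \<in> (\<lambda>g. act N g (Psi p U0)) ` (levi N js \<inter> Defs.borel N)" using eL eB by blast
    qed
    show "(\<lambda>g. act N g (Psi p U0)) ` (levi N js \<inter> Defs.borel N) \<subseteq> Psi p ` (\<lambda>h. act n h U0) ` (sub p n ` levi N js \<inter> Defs.borel n)"
    proof
      fix x assume "x \<in> (\<lambda>g. act N g (Psi p U0)) ` (levi N js \<inter> Defs.borel N)"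
      then obtain g where g: "g \<in> levi N js" "g \<in> Defs.borel N" "x = act N g (Psi p U0)" by blast
      have "x = Psi p (act n (sub p n g) U0)" using KEY2[OF g(2) sU' pnN] g(3) by (simp add: act_mv)
      moreover have "sub p n g \<in> sub p n ` levi N js \<inter> Defs.borel n" using g(1) sub_borel[OF g(2) pnN] by blast
      ultimately show "x \<in> Psi p ` (\<lambda>h. act n h U0) ` (sub p n ` levi N js \<inter> Defs.borel n)" by blast
    qed
  qed
  then show ?thesis using RL p_def n_def by simp
qed


lemma gclosure_mono: "S \<subseteq> T \<Longrightarrow> gclosure N d S \<subseteq> gclosure N d T"
  unfolding gclosure_def by blast

theorem proposition4p3:
  fixes w :: "nat list" and d N :: nat and js :: "nat list"
  assumes "1 \<le> d" and "d < N"
    and "w \<in> Iseq d N"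
    and "levi_data N js"
    and "stable w d N (levi N js)"
    and "w \<noteq> [1..<d+1]"
  shows "spherical w d N (levi N js) \<longleftrightarrow>
         spherical (red_w w) (red_d w) (red_N w) (red_L w (levi N js))"
proof -
  note w = assms(3) and d = assms(1) and st = assms(5)
  define p where "p = red_p w"
  define n where "n = red_N w"
  define d' where "d' = red_d w"
  define L where "L = levi N js"
  define Lb where "Lb = red_L w L"
  define Xw where "Xw = schubert w d N"
  define Xb where "Xb = schubert (red_w w) d' n"
  note wf = wfacts[OF w d]
  have pnN: "p + n \<le> N" using wf(7,8) by (simp add: p_def n_def red_N_eq)
  have pd: "p \<le> d" using wf(4) by (simp add: p_def)
  have d'eq: "d' = d - p" using red_d_eq[OF w] by (simp add: p_def d'_def)
  have XwXb: "Xw = Psi p ` Xb" unfolding Xw_def Xb_def p_def d'_def n_def by (rule Xw_eq[OF w d])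
  have sXb: "\<forall>U\<in>Xb. \<forall>u\<in>U. supp n u" unfolding Xb_def schubert_def using gclosure_supp by blast
  have inj: "\<And>U U'. \<forall>u\<in>U. supp n u \<Longrightarrow> \<forall>u\<in>U'. supp n u \<Longrightarrow> Psi p U = Psi p U' \<Longrightarrow> U = U'"
    by (rule Psi_inj)
  have orb: "\<And>U0. \<forall>u\<in>U0. supp n u \<Longrightarrow>
      Psi p ` ((\<lambda>h. act n h U0) ` (Lb \<inter> Defs.borel n)) = (\<lambda>g. act N g (Psi p U0)) ` (L \<inter> Defs.borel N)"
    unfolding p_def n_def Lb_def L_def using orbit_L[OF w d] by simp
  have sOrb: "\<And>U0. \<forall>U\<in>(\<lambda>h. act n h U0) ` (Lb \<inter> Defs.borel n). \<forall>u\<in>U. supp n u"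
    unfolding act_mv using supp_mv by blast
  have T1': "\<And>U S. U \<in> gclosure n d' S \<Longrightarrow> Psi p U \<in> gclosure N d (Psi p ` S)"
    unfolding d'eq by (rule T1[OF pd pnN])
  have T2': "\<And>V S. \<forall>U\<in>S. \<forall>u\<in>U. supp n u \<Longrightarrow> V \<in> gclosure N d (Psi p ` S) \<Longrightarrow> \<exists>U\<in>gclosure n d' S. V = Psi p U"
    unfolding d'eq by (rule T2[OF pd pnN])
  have gsupp: "\<And>U S. U \<in> gclosure n d' S \<Longrightarrow> \<forall>u\<in>U. supp n u" by (rule gclosure_supp)
  show ?thesis
    unfolding L_def[symmetric] Lb_def[symmetric] n_def[symmetric] d'_def[symmetric]
  proof
    assume sph: "spherical w d N L"
    then obtain V0 where V0: "V0 \<in> Xw"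
      "Defs.rel_open N d ((\<lambda>g. act N g V0) ` (L \<inter> Defs.borel N)) Xw"
      "Xw \<subseteq> gclosure N d ((\<lambda>g. act N g V0) ` (L \<inter> Defs.borel N))"
      unfolding spherical_def Let_def Xw_def by blast
    obtain U0 where U0: "U0 \<in> Xb" "V0 = Psi p U0" using V0(1) XwXb by blast
    define Orb' where "Orb' = (\<lambda>h. act n h U0) ` (Lb \<inter> Defs.borel n)"
    have sU0: "\<forall>u\<in>U0. supp n u" using sXb U0(1) by blast
    have OO: "Psi p ` Orb' = (\<lambda>g. act N g V0) ` (L \<inter> Defs.borel N)"
      unfolding Orb'_def U0(2) by (rule orb[OF sU0])
    have sO: "\<forall>U\<in>Orb'. \<forall>u\<in>U. supp n u" unfolding Orb'_def using sOrb by blast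
    have "stable (red_w w) d' n Lb"
      unfolding d'_def n_def Lb_def L_def by (rule stable_red[OF w d st])
    moreover have "Orb' \<subseteq> Xb"
    proof
      fix x assume x: "x \<in> Orb'"
      have OXw: "(\<lambda>g. act N g V0) ` (L \<inter> Defs.borel N) \<subseteq> Xw"
        using V0(2) unfolding Defs.rel_open_def by (rule conjunct1)
      have "Psi p x \<in> Psi p ` Orb'" using x by (rule imageI)
      then have "Psi p x \<in> Xw" using OO OXw by simp (rule subsetD)
      then obtain y where y: "y \<in> Xb" "Psi p x = Psi p y" using XwXb by blast
      have "x = y" using inj[OF _ _ y(2)] sO x sXb y(1) by blast
      then show "x \<in> Xb" using y(1) by simp
    qed
    moreover have "Orb' \<inter> gclosure n d' (Xb - Orb') = {}"
    proof (rule ccontr)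
      assume "Orb' \<inter> gclosure n d' (Xb - Orb') \<noteq> {}"
      then obtain U where U: "U \<in> Orb'" "U \<in> gclosure n d' (Xb - Orb')" by blast
      have "Psi p ` (Xb - Orb') \<subseteq> Xw - (\<lambda>g. act N g V0) ` (L \<inter> Defs.borel N)"
      proof
        fix x assume "x \<in> Psi p ` (Xb - Orb')"
        then obtain y where y: "y \<in> Xb" "y \<notin> Orb'" "x = Psi p y" by blast
        have "x \<in> Xw" using y XwXb by blast
        moreover have "x \<notin> Psi p ` Orb'"
        proof
          assume "x \<in> Psi p ` Orb'"
          then obtain z where "z \<in> Orb'" "Psi p y = Psi p z" using y(3) by blast
          then show False using inj sO sXb y by metis
        qed
        ultimately show "x \<in> Xw - (\<lambda>g. act N g V0) ` (L \<inter> Defs.borel N)" using OO by blast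
      qed
      then have "Psi p U \<in> gclosure N d (Xw - (\<lambda>g. act N g V0) ` (L \<inter> Defs.borel N))"
        using T1'[OF U(2)] gclosure_mono by blast
      moreover have "Psi p U \<in> (\<lambda>g. act N g V0) ` (L \<inter> Defs.borel N)" using OO U(1) by blast
      ultimately show False using V0(2) unfolding Defs.rel_open_def by blast
    qed
    moreover have "Xb \<subseteq> gclosure n d' Orb'"
    proof
      fix U assume U: "U \<in> Xb"
      then have "Psi p U \<in> Xw" unfolding XwXb by (rule imageI)
      then have "Psi p U \<in> gclosure N d ((\<lambda>g. act N g V0) ` (L \<inter> Defs.borel N))" by (rule subsetD[OF V0(3)])
      then have "Psi p U \<in> gclosure N d (Psi p ` Orb')" unfolding OO .
      then obtain U' where U': "U' \<in> gclosure n d' Orb'" "Psi p U = Psi p U'" using T2'[OF sO] by blast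
      have "U = U'" using inj[OF _ _ U'(2)] gsupp[OF U'(1)] sXb U by blast
      then show "U \<in> gclosure n d' Orb'" using U'(1) by simp
    qed
    ultimately show "spherical (red_w w) d' n Lb"
      unfolding spherical_def Let_def Xb_def[symmetric] Defs.rel_open_def Orb'_def using U0(1) by blast
  next
    assume sph: "spherical (red_w w) d' n Lb"
    then obtain U0 where U0: "U0 \<in> Xb"
      "Defs.rel_open n d' ((\<lambda>h. act n h U0) ` (Lb \<inter> Defs.borel n)) Xb"
      "Xb \<subseteq> gclosure n d' ((\<lambda>h. act n h U0) ` (Lb \<inter> Defs.borel n))"
      unfolding spherical_def Let_def Xb_def by blast
    define Orb' where "Orb' = (\<lambda>h. act n h U0) ` (Lb \<inter> Defs.borel n)"
    define Orb where "Orb = (\<lambda>g. act N g (Psi p U0)) ` (L \<inter> Defs.borel N)"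
    have sU0: "\<forall>u\<in>U0. supp n u" using sXb U0(1) by blast
    have OO: "Psi p ` Orb' = Orb"
      unfolding Orb'_def Orb_def by (rule orb[OF sU0])
    have sO: "\<forall>U\<in>Orb'. \<forall>u\<in>U. supp n u" unfolding Orb'_def using sOrb by blast
    have OXb: "Orb' \<subseteq> Xb" using U0(2) unfolding Defs.rel_open_def Orb'_def by blast
    have "Psi p U0 \<in> Xw" using XwXb U0(1) by blast
    moreover have "Orb \<subseteq> Xw" using OO OXb XwXb by blast
    moreover have "Orb \<inter> gclosure N d (Xw - Orb) = {}"
    proof (rule ccontr)
      assume "Orb \<inter> gclosure N d (Xw - Orb) \<noteq> {}"
      then obtain V where V: "V \<in> Orb" "V \<in> gclosure N d (Xw - Orb)" by blast
      have "Xw - Orb \<subseteq> Psi p ` (Xb - Orb')"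
      proof
        fix x assume x: "x \<in> Xw - Orb"
        then obtain y where y: "y \<in> Xb" "x = Psi p y" using XwXb by blast
        have "y \<notin> Orb'" using x y OO by blast
        then show "x \<in> Psi p ` (Xb - Orb')" using y by blast
      qed
      then have "V \<in> gclosure N d (Psi p ` (Xb - Orb'))" using V(2) gclosure_mono by blast
      moreover have "\<forall>U\<in>Xb - Orb'. \<forall>u\<in>U. supp n u" using sXb by blast
      ultimately obtain U where U: "U \<in> gclosure n d' (Xb - Orb')" "V = Psi p U" using T2' by blast
      obtain U' where U': "U' \<in> Orb'" "V = Psi p U'" using V(1) OO by blast
      have "U = U'" using inj gsupp[OF U(1)] sO U'(1) U(2) U'(2) by metis
      then show False using U(1) U'(1) U0(2) unfolding Defs.rel_open_def Orb'_def by blast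
    qed
    moreover have "Xw \<subseteq> gclosure N d Orb"
    proof
      fix V assume "V \<in> Xw"
      then obtain U where "U \<in> Xb" "V = Psi p U" using XwXb by blast
      then show "V \<in> gclosure N d Orb" using U0(3) T1' OO unfolding Orb'_def by blast
    qed
    ultimately show "spherical w d N L"
      unfolding spherical_def Let_def Xw_def[symmetric] Defs.rel_open_def Orb_def
      using st L_def by blast
  qed
qed

end
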